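(* Let $\mathbf a=(a_0,a_1,a_2,a_3)\in\mathbb{Z}_2^4$ with $a_0a_1a_2a_3\ne0$. Then $X_{\mathbf a}$ has no $\mathbb{Q}_2$-rational point if and only if $\mathbf a$ is $\simeq$-equivalent to one of $(1,1,1,1),(1,1,5,5),(1,1,2,2),(1,1,10,10),(1,3,2,6),(1,3,10,14),(1,5,6,14)$.
   Context: $X_{\mathbf a}\subset\mathbb{P}^3_{\mathbb{Q}_2}$ is the quadric surface $\sum_{i=0}^3a_ix_i^2=0$. For $\mathbf a,\mathbf b\in\mathbb{Q}_2^{4}$ write $\mathbf a\simeq\mathbf b$ if there exist $\alpha,\alpha_0,\dots,\alpha_3\in\mathbb{Q}_2^\times$ and a permutation $\sigma$ of $\{0,1,2,3\}$ with $a_i=\alpha\, b_{\sigma(i)}\alpha_i^2$ for all $i$. *)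

theory Defs
  imports "HOL-Number_Theory.Cong" "HOL-Computational_Algebra.Fraction_Field" "HOL-Combinatorics.Permutations"
begin

section \<open>The 2-adic integers as an inverse limit of the rings Z/2^n Z\<close>

definition z2_seq :: "(nat \<Rightarrow> int) \<Rightarrow> bool" where
  "z2_seq f \<longleftrightarrow> (\<forall>m n. m \<le> n \<longrightarrow> [f n = f m] (mod 2 ^ m))"

definition z2_rel :: "(nat \<Rightarrow> int) \<Rightarrow> (nat \<Rightarrow> int) \<Rightarrow> bool" where
  "z2_rel f g \<longleftrightarrow> z2_seq f \<and> z2_seq g \<and> (\<forall>n. [f n = g n] (mod 2 ^ n))"

lemma z2_rel_part_equivp: "part_equivp z2_rel"
proof (rule part_equivpI)
  show "\<exists>x. z2_rel x x"
    by (rule exI[of _ "\<lambda>_. 0"]) (simp add: z2_rel_def z2_seq_def)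
  show "symp z2_rel"
    by (auto simp: symp_def z2_rel_def cong_sym)
  show "transp z2_rel"
    unfolding transp_def z2_rel_def using cong_trans by blast
qed

quotient_type z2 = "nat \<Rightarrow> int" / partial: z2_rel
  by (rule z2_rel_part_equivp)

lemma z2_seq_add: "z2_seq f \<Longrightarrow> z2_seq g \<Longrightarrow> z2_seq (\<lambda>n. f n + g n)"
  unfolding z2_seq_def by (auto intro: cong_add)

lemma z2_seq_mult: "z2_seq f \<Longrightarrow> z2_seq g \<Longrightarrow> z2_seq (\<lambda>n. f n * g n)"
  unfolding z2_seq_def by (auto intro: cong_mult)

lemma z2_seq_minus: "z2_seq f \<Longrightarrow> z2_seq (\<lambda>n. - f n)"
  unfolding z2_seq_def by (auto intro: cong_minus_minus_iff[THEN iffD2])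

lemma z2_seq_const: "z2_seq (\<lambda>_. c)"
  unfolding z2_seq_def by simp

instantiation z2 :: comm_ring_1
begin

lift_definition zero_z2 :: z2 is "\<lambda>_. 0"
  by (simp add: z2_rel_def z2_seq_def)

lift_definition one_z2 :: z2 is "\<lambda>_. 1"
  by (simp add: z2_rel_def z2_seq_def)

lift_definition plus_z2 :: "z2 \<Rightarrow> z2 \<Rightarrow> z2" is "\<lambda>f g n. f n + g n"
  by (auto simp: z2_rel_def intro: z2_seq_add cong_add)

lift_definition times_z2 :: "z2 \<Rightarrow> z2 \<Rightarrow> z2" is "\<lambda>f g n. f n * g n"
  by (auto simp: z2_rel_def intro: z2_seq_mult cong_mult)

lift_definition uminus_z2 :: "z2 \<Rightarrow> z2" is "\<lambda>f n. - f n"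
  by (auto simp: z2_rel_def intro: z2_seq_minus cong_minus_minus_iff[THEN iffD2])

lift_definition minus_z2 :: "z2 \<Rightarrow> z2 \<Rightarrow> z2" is "\<lambda>f g n. f n - g n"
  by (auto simp: z2_rel_def z2_seq_def intro: cong_diff)

instance
proof
  fix a b c :: z2
  show "a * b * c = a * (b * c)"
    by transfer (auto simp: z2_rel_def algebra_simps intro: z2_seq_mult)
  show "a * b = b * a"
    by transfer (auto simp: z2_rel_def algebra_simps intro: z2_seq_mult)
  show "1 * a = a"
    by transfer (auto simp: z2_rel_def)
  show "a + b + c = a + (b + c)"
    by transfer (auto simp: z2_rel_def algebra_simps intro: z2_seq_add)
  show "a + b = b + a"
    by transfer (auto simp: z2_rel_def algebra_simps intro: z2_seq_add)
  show "0 + a = a"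
    by transfer (auto simp: z2_rel_def)
  show "- a + a = 0"
    by transfer (auto simp: z2_rel_def z2_seq_const)
  show "a - b = a + - b"
    by transfer (auto simp: z2_rel_def z2_seq_def intro: cong_diff)
  show "(a + b) * c = a * c + b * c"
    by transfer (auto simp: z2_rel_def algebra_simps intro: z2_seq_mult z2_seq_add)
  show "(0::z2) \<noteq> 1"
    by transfer (auto simp: z2_rel_def z2_seq_def cong_def dest: spec[of _ 1])
qed

end

lemma not_dvd_pow2_mult:
  fixes a b :: int
  assumes "\<not> 2 ^ m dvd a" "\<not> 2 ^ k dvd b"
  shows "\<not> 2 ^ (m + k) dvd a * b"
  using assms
proof (induction m arbitrary: a)
  case 0
  then show ?case by simp
next
  case (Suc m)
  show ?case
  proof (cases "even a")
    case True
    then obtain c where c: "a = 2 * c" by blast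
    with Suc.prems have "\<not> 2 ^ m dvd c" by simp
    with Suc.IH[OF this Suc.prems(2)] show ?thesis
      by (simp add: c mult.assoc)
  next
    case False
    hence "coprime (2 ^ (Suc m + k)) a" by simp
    hence "2 ^ (Suc m + k) dvd a * b \<Longrightarrow> 2 ^ (Suc m + k) dvd b"
      using coprime_dvd_mult_right_iff by blast
    moreover have "2 ^ (Suc m + k) dvd b \<Longrightarrow> 2 ^ k dvd (b::int)"
      by (metis dvd_mult_left le_add2 le_imp_power_dvd dvd_trans)
    ultimately show ?thesis using Suc.prems by blast
  qed
qed

lemma z2_nonzero_witness:
  assumes "z2_seq f" "\<not> (\<forall>n. [f n = 0] (mod 2 ^ n))"
  shows "\<exists>m. \<forall>N\<ge>m. \<not> 2 ^ m dvd f N"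
proof -
  from assms(2) obtain m where m: "\<not> [f m = 0] (mod 2 ^ m)" by blast
  have "\<not> 2 ^ m dvd f N" if "N \<ge> m" for N
  proof
    assume "2 ^ m dvd f N"
    moreover have "[f N = f m] (mod 2 ^ m)" using assms(1) that by (simp add: z2_seq_def)
    ultimately have "[f m = 0] (mod 2 ^ m)"
      by (metis cong_0_iff cong_dvd_iff)
    with m show False by simp
  qed
  thus ?thesis by blast
qed

instance z2 :: idom
proof
  fix a b :: z2
  assume "a \<noteq> 0" "b \<noteq> 0"
  thus "a * b \<noteq> 0"
  proof (transfer)
    fix f g
    assume f: "z2_rel f f" and g: "z2_rel g g"
      and nf: "\<not> z2_rel f (\<lambda>_. 0)" and ng: "\<not> z2_rel g (\<lambda>_. 0)"
    from f nf obtain m where m: "\<forall>N\<ge>m. \<not> 2 ^ m dvd f N"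
      using z2_nonzero_witness by (auto simp: z2_rel_def z2_seq_const)
    from g ng obtain k where k: "\<forall>N\<ge>k. \<not> 2 ^ k dvd g N"
      using z2_nonzero_witness by (auto simp: z2_rel_def z2_seq_const)
    have "\<not> 2 ^ (m + k) dvd f (m + k) * g (m + k)"
      using m k not_dvd_pow2_mult by simp
    thus "\<not> z2_rel (\<lambda>n. f n * g n) (\<lambda>_. 0)"
      by (auto simp: z2_rel_def cong_0_iff)
  qed
qed

type_synonym Q2 = "z2 fract"

definition z2_to_Q2 :: "z2 \<Rightarrow> Q2" where
  "z2_to_Q2 z = Fract z 1"

text \<open>The diagonal quadric sum a_i x_i^2 = 0 in P^3 has a K-rational point iff there is
  a nonzero vector (x_0,...,x_3) in K^4 with sum a_i x_i^2 = 0.\<close>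
definition has_rational_point :: "'a::field list \<Rightarrow> bool" where
  "has_rational_point a \<longleftrightarrow>
     (\<exists>x::'a list. length x = 4 \<and> (\<exists>i<4. x ! i \<noteq> 0) \<and> (\<Sum>i<4. a ! i * (x ! i)^2) = 0)"

definition quad_equiv :: "'a::field list \<Rightarrow> 'a list \<Rightarrow> bool" (infix \<open>\<simeq>\<^sub>q\<close> 50) where
  "a \<simeq>\<^sub>q b \<longleftrightarrow>
     (\<exists>\<alpha> (\<alpha>s::nat \<Rightarrow> 'a) \<sigma>. \<alpha> \<noteq> 0 \<and> (\<forall>i<4. \<alpha>s i \<noteq> 0) \<and> \<sigma> permutes {..<4} \<and>
        (\<forall>i<4. a ! i = \<alpha> * b ! (\<sigma> i) * (\<alpha>s i)^2))"

end

theory Submission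
  imports Defs
begin

lift_definition zc :: "nat \<Rightarrow> z2 \<Rightarrow> int \<Rightarrow> bool" is "\<lambda>n f k. [f n = k] (mod 2^n)"
  by (auto simp: z2_rel_def intro: cong_trans cong_sym)

lemma zc_add: "zc n x a \<Longrightarrow> zc n y b \<Longrightarrow> zc n (x+y) (a+b)"
  by transfer (auto intro: cong_add)

lemma zc_mult: "zc n x a \<Longrightarrow> zc n y b \<Longrightarrow> zc n (x*y) (a*b)"
  by transfer (auto intro: cong_mult)

lemma zc_uminus: "zc n x a \<Longrightarrow> zc n (-x) (-a)"
  by transfer (auto intro: cong_minus_minus_iff[THEN iffD2])

lemma zc_one: "zc n 1 1"
  by transfer simp

lemma zc_zero: "zc n 0 0"
  by transfer simp

lemma zc_exists: "\<exists>k. zc n x k"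
  by transfer (rule exI, rule cong_refl)

lemma zc_unique: "zc n x a \<Longrightarrow> zc n x b \<Longrightarrow> [a = b] (mod 2^n)"
  by transfer (meson cong_sym cong_trans)

lemma zc_cong: "zc n x a \<Longrightarrow> [a = b] (mod 2^n) \<Longrightarrow> zc n x b"
  by transfer (meson cong_trans)

lemma zc_mono: "m \<le> n \<Longrightarrow> zc n x a \<Longrightarrow> zc m x a"
proof transfer
  fix m n f a
  assume h: "m \<le> n" "z2_rel f f" "[f n = a] (mod 2 ^ n)"
  have "[f n = f m] (mod 2^m)" using h by (auto simp: z2_rel_def z2_seq_def)
  moreover have "[f n = a] (mod 2^m)"
    using h(3) cong_dvd_modulus le_imp_power_dvd h(1) by blast
  ultimately show "[f m = a] (mod 2^m)" by (meson cong_sym cong_trans)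
qed

lemma zc_eq0: "(\<And>n. zc n x 0) \<Longrightarrow> x = 0"
  by transfer (auto simp: z2_rel_def z2_seq_const)

lemma zc_of_nat: "zc n (of_nat k) (int k)"
proof (induction k)
  case 0 then show ?case by (simp add: zc_zero)
next
  case (Suc k) then show ?case using zc_add[OF zc_one Suc] by (simp add: add.commute)
qed

lemma zc_of_int: "zc n (of_int k) k"
proof (cases k rule: int_cases)
  case (nonneg m) then show ?thesis using zc_of_nat by simp
next
  case (neg m) then show ?thesis using zc_uminus[OF zc_of_nat[of n "Suc m"]] by simp
qed

lemma zc_power: "zc n x a \<Longrightarrow> zc n (x^k) (a^k)"
  by (induction k) (auto simp: zc_one intro: zc_mult)

lemma zc_diff: "zc n x a \<Longrightarrow> zc n y b \<Longrightarrow> zc n (x-y) (a-b)"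
  using zc_add[OF _ zc_uminus] by (metis diff_conv_add_uminus)

lemma z2_of_int_eq0: "(of_int t :: z2) = 0 \<Longrightarrow> t = 0"
proof (rule ccontr)
  assume h: "of_int t = (0::z2)" "t \<noteq> 0"
  have "zc (nat \<bar>t\<bar>) 0 t" using zc_of_int[of "nat \<bar>t\<bar>" t] h by simp
  hence "[0 = t] (mod 2 ^ nat \<bar>t\<bar>)" using zc_unique zc_zero by blast
  hence "[t = 0] (mod 2 ^ nat \<bar>t\<bar>)" by (rule cong_sym)
  hence d: "2 ^ nat \<bar>t\<bar> dvd t" by (simp add: cong_0_iff)
  have "int (nat \<bar>t\<bar>) < int (2 ^ nat \<bar>t\<bar>)" by (simp only: of_nat_less_iff less_exp)
  hence "\<bar>t\<bar> < 2 ^ nat \<bar>t\<bar>" by (simp only: of_nat_power int_nat_eq abs_ge_zero if_True of_nat_numeral)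
  moreover have "\<bar>2 ^ nat \<bar>t\<bar>\<bar> \<le> \<bar>t\<bar>" using dvd_imp_le_int[OF h(2) d] .
  ultimately show False by simp
qed

instance z2 :: ring_char_0
proof
  show "inj (of_nat :: nat \<Rightarrow> z2)"
  proof (rule injI)
    fix m n :: nat assume "(of_nat m :: z2) = of_nat n"
    hence "(of_int (int m - int n) :: z2) = 0" by simp
    thus "m = n" using z2_of_int_eq0 by fastforce
  qed
qed

instance fract :: ("{idom,ring_char_0}") ring_char_0
proof
  show "inj (of_nat :: nat \<Rightarrow> 'a fract)"
    by (rule injI) (simp add: of_nat_fract eq_fract)
qed

lemma zc_div: assumes "zc k x 0" shows "\<exists>w. x = 2^k * w"
proof -
  have "\<exists>f. z2_rel f f \<and> x = abs_z2 f" by (induct x rule: z2.abs_induct) blast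
  then obtain f where f: "z2_rel f f" "x = abs_z2 f" by blast
  have sf: "z2_seq f" using f by (simp add: z2_rel_def)
  have fk: "[f k = 0] (mod 2^k)" using assms f by (simp add: zc.abs_eq)
  have fn: "2^k dvd f (n + k)" for n
  proof -
    have "[f (n+k) = f k] (mod 2^k)" using sf by (simp add: z2_seq_def)
    with fk have "[f (n+k) = 0] (mod 2^k)" using cong_trans by blast
    thus ?thesis by (simp add: cong_0_iff)
  qed
  define g where "g n = f (n + k) div 2^k" for n
  have gk: "2^k * g n = f (n+k)" for n using fn[of n] by (simp add: g_def)
  have sg: "z2_seq g" unfolding z2_seq_def
  proof (intro allI impI)
    fix m n :: nat assume "m \<le> n"
    hence "[f (n+k) = f (m+k)] (mod 2^(m+k))" using sf by (simp add: z2_seq_def)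
    hence "[f (n+k) = f (m+k)] (mod 2^k * 2^m)" by (simp add: power_add mult.commute)
    hence "[2^k * g n = 2^k * g m] (mod 2^k * 2^m)" by (simp only: gk)
    hence "2^k * 2^m dvd 2^k * (g n - g m)" by (simp add: cong_iff_dvd_diff right_diff_distrib)
    hence "2^m dvd (g n - g m)" by (subst (asm) dvd_mult_cancel_left) simp
    thus "[g n = g m] (mod 2^m)" by (simp add: cong_iff_dvd_diff)
  qed
  have "z2_rel g g" using sg by (simp add: z2_rel_def)
  have c2: "(2::z2)^k = abs_z2 (\<lambda>_. 2^k)"
  proof -
    have "(2::z2)^k = of_int (2^k)" by simp
    also have "... = abs_z2 (\<lambda>_. 2^k)"
      by (rule zc_eq0[of "of_int (2^k) - abs_z2 (\<lambda>_. 2^k)", THEN eq_iff_diff_eq_0[THEN iffD2]])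
         (metis (no_types) zc_diff zc_of_int zc.abs_eq z2_rel_def z2_seq_const cong_refl diff_self)
    finally show ?thesis .
  qed
  have "2^k * abs_z2 g = abs_z2 (\<lambda>n. 2^k * g n)"
    using c2 times_z2.abs_eq[of "\<lambda>_. 2^k" g] \<open>z2_rel g g\<close> by (simp add: z2_rel_def z2_seq_const)
  also have "... = abs_z2 f"
  proof -
    have "z2_rel (\<lambda>n. 2^k * g n) f"
      unfolding z2_rel_def
    proof (intro conjI allI)
      show "z2_seq (\<lambda>n. 2^k * g n)" using z2_seq_mult[OF z2_seq_const sg] .
      show "z2_seq f" by fact
      fix n have "[f (n+k) = f n] (mod 2^n)" using sf by (simp add: z2_seq_def)
      thus "[2^k * g n = f n] (mod 2^n)" by (simp add: gk)
    qed
    thus ?thesis using Quotient_rel[OF Quotient_z2] by blast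
  qed
  finally show ?thesis using f by metis
qed

lemma zc_mod2: "zc 1 x 0 \<or> zc 1 x 1"
proof -
  obtain k where k: "zc 1 x k" using zc_exists by blast
  show ?thesis
  proof (cases "k mod 2 = 0")
    case True
    hence "[k = 0] (mod 2^1)" by (simp add: cong_def)
    thus ?thesis using zc_cong[OF k] by blast
  next
    case False
    hence "k mod 2 = 1" by presburger
    hence "[k = 1] (mod 2^1)" by (simp add: cong_def)
    thus ?thesis using zc_cong[OF k] by blast
  qed
qed

lemma zc_two: "zc n 2 2"
  using zc_of_int[of n 2] by simp

lemma zc_pow_mult: "zc n (2^n * w) 0"
proof -
  obtain b where b: "zc n w b" using zc_exists by blast
  have "zc n (2^n * w) (2^n * b)" by (rule zc_mult[OF zc_power[OF zc_two] b])
  moreover have "[2^n * b = 0] (mod 2^n)" by (simp add: cong_0_iff)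
  ultimately show ?thesis by (rule zc_cong)
qed

lemma zc_0_triv: "zc 0 x 0"
proof -
  obtain b where b: "zc 0 x b" using zc_exists by blast
  show ?thesis by (rule zc_cong[OF b]) (simp add: cong_def)
qed

lemma z2_decomp_aux: "\<not> zc n x 0 \<Longrightarrow> \<exists>k u. x = 2^k * u \<and> zc 1 u 1"
proof (induction n arbitrary: x)
  case 0 then show ?case using zc_0_triv by blast
next
  case (Suc n)
  show ?case
  proof (cases "zc 1 x 1")
    case True
    then show ?thesis by (intro exI[of _ 0] exI[of _ x]) simp
  next
    case False
    hence "zc 1 x 0" using zc_mod2 by blast
    then obtain w where w: "x = 2 * w" using zc_div[of 1 x] by auto
    have "\<not> zc n w 0"
    proof
      assume "zc n w 0"
      then obtain w' where "w = 2^n * w'" using zc_div by blast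
      hence "x = 2^Suc n * w'" using w by simp
      thus False using Suc.prems zc_pow_mult[of "Suc n" w'] by simp
    qed
    then obtain k u where "w = 2^k * u" "zc 1 u 1" using Suc.IH by blast
    thus ?thesis using w by (intro exI[of _ "Suc k"] exI[of _ u]) simp
  qed
qed

lemma z2_decomp: "x \<noteq> 0 \<Longrightarrow> \<exists>k u. x = 2^k * u \<and> zc 1 u 1"
  using z2_decomp_aux zc_eq0 by blast

fun hs :: "(nat \<Rightarrow> int) \<Rightarrow> nat \<Rightarrow> int" where
  "hs f 0 = 1"
| "hs f (Suc n) = (if n < 3 then 1 else if [hs f n ^ 2 = f (Suc n)] (mod 2 ^ Suc n) then hs f n
     else hs f n + 2 ^ (n - 1))"

lemma hs_inv:
  assumes sf: "z2_seq f" and f3: "[f 3 = 1] (mod 8)" and n: "3 \<le> n"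
  shows "odd (hs f n) \<and> [hs f n ^ 2 = f n] (mod 2 ^ n)"
  using n
proof (induction n rule: dec_induct)
  case base
  have "hs f 3 = 1" using hs.simps(2)[of f 2] by simp
  then show ?case using f3 by (simp add: cong_sym)
next
  case (step n)
  define s where "s = hs f n"
  have so: "odd s" and sc: "[s^2 = f n] (mod 2^n)" using step.IH by (auto simp: s_def)
  have "[f (Suc n) = f n] (mod 2^n)" using sf by (simp add: z2_seq_def)
  hence sc2: "[s^2 = f (Suc n)] (mod 2^n)" using sc by (meson cong_sym cong_trans)
  show ?case
  proof (cases "[s ^ 2 = f (Suc n)] (mod 2 ^ Suc n)")
    case True
    have "hs f (Suc n) = s" using True step.hyps by (simp add: s_def)
    then show ?thesis using True so by simp
  next
    case False
    have hsS: "hs f (Suc n) = s + 2^(n-1)" using False step.hyps by (simp add: s_def)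
    obtain m where m: "n = m + 3" using step.hyps by (metis add.commute le_Suc_ex)
    obtain t where t: "s^2 - f (Suc n) = 2^n * t" using sc2 by (metis cong_iff_dvd_diff dvd_def)
    have "odd t"
    proof
      assume "even t"
      then obtain r where "t = 2 * r" by blast
      hence "s^2 - f (Suc n) = 2^Suc n * r" using t by simp
      hence "[s ^ 2 = f (Suc n)] (mod 2 ^ Suc n)" by (metis cong_iff_dvd_diff dvd_triv_left)
      with False show False by simp
    qed
    with so have "even (t + s)" by simp
    then obtain r where r: "t + s = 2 * r" by blast
    have "(s + 2^(n-1))^2 - f (Suc n) = 2^Suc n * (r + 2^m)"
    proof -
      have e: "(s + 2^(m+2))^2 = s^2 + 2^(m+3) * s + 2^(m+4) * 2^m"
        by (simp add: power2_eq_square algebra_simps power_add)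
      have "(s + 2^(n-1))^2 - f (Suc n) = 2^(m+3) * t + 2^(m+3) * s + 2^(m+4) * 2^m"
        using t e m by simp
      also have "... = 2^(m+3) * (t + s) + 2^(m+4) * 2^m" by (simp add: algebra_simps)
      also have "... = 2^(m+4) * (r + 2^m)" using r by (simp add: algebra_simps power_add)
      finally show ?thesis using m by simp
    qed
    hence "[(s + 2^(n-1))^2 = f (Suc n)] (mod 2^Suc n)" by (metis cong_iff_dvd_diff dvd_triv_left)
    moreover have "odd (s + 2^(n-1))" using so m by simp
    ultimately show ?thesis using hsS by simp
  qed
qed

lemma hs_step: "3 \<le> n \<Longrightarrow> [hs f (Suc n) = hs f n] (mod 2 ^ (n - 1))"
  by (auto simp: cong_def)

lemma hs_coh: assumes "3 \<le> m" "m \<le> n" shows "[hs f n = hs f m] (mod 2 ^ (m - 1))"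
  using assms(2)
proof (induction n rule: dec_induct)
  case base then show ?case by simp
next
  case (step n)
  have "[hs f (Suc n) = hs f n] (mod 2 ^ (n - 1))" using hs_step assms step.hyps by simp
  moreover have "(2::int) ^ (m - 1) dvd 2 ^ (n - 1)"
    by (rule le_imp_power_dvd) (use step.hyps in simp)
  ultimately have "[hs f (Suc n) = hs f n] (mod 2 ^ (m - 1))"
    by (rule cong_dvd_modulus)
  thus ?case using step.IH cong_trans by blast
qed

lemma hensel_seq:
  assumes sf: "z2_seq f" and f3: "[f 3 = 1] (mod 8)"
  shows "\<exists>g. z2_seq g \<and> (\<forall>n. [g n * g n = f n] (mod 2^n))"
proof (intro exI conjI allI)
  define g where "g n = hs f (n + 3)" for n
  show "z2_seq g" unfolding z2_seq_def
  proof (intro allI impI)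
    fix m n :: nat assume "m \<le> n"
    hence "[hs f (n+3) = hs f (m+3)] (mod 2 ^ (m + 3 - 1))" using hs_coh[of "m+3" "n+3" f] by simp
    moreover have "(2::int) ^ m dvd 2 ^ (m + 3 - 1)"
      by (rule le_imp_power_dvd) simp
    ultimately have "[hs f (n+3) = hs f (m+3)] (mod 2 ^ m)"
      by (rule cong_dvd_modulus)
    thus "[g n = g m] (mod 2 ^ m)" by (simp add: g_def)
  qed
  fix n
  have "[hs f (n+3) ^ 2 = f (n+3)] (mod 2^(n+3))" using hs_inv[OF sf f3, of "n+3"] by simp
  moreover have "(2::int) ^ n dvd 2 ^ (n + 3)"
    by (rule le_imp_power_dvd) simp
  ultimately have "[hs f (n+3) ^ 2 = f (n+3)] (mod 2^n)"
    by (rule cong_dvd_modulus)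
  moreover have "[f (n+3) = f n] (mod 2^n)" using sf by (simp add: z2_seq_def)
  ultimately show "[g n * g n = f n] (mod 2^n)"
    unfolding g_def power2_eq_square using cong_trans by blast
qed

lemma z2_sqrt: assumes "zc 3 v 1" shows "\<exists>y. y * y = v"
proof -
  have "\<exists>f. z2_rel f f \<and> v = abs_z2 f" by (induct v rule: z2.abs_induct) blast
  then obtain f where f: "z2_rel f f" "v = abs_z2 f" by blast
  have sf: "z2_seq f" using f by (simp add: z2_rel_def)
  have "[f 3 = 1] (mod 8)" using assms f by (simp add: zc.abs_eq)
  then obtain g where g: "z2_seq g" "\<forall>n. [g n * g n = f n] (mod 2^n)" using hensel_seq sf by blast
  have gg: "z2_rel g g" using g by (simp add: z2_rel_def)
  have "abs_z2 g * abs_z2 g = abs_z2 (\<lambda>n. g n * g n)" using times_z2.abs_eq[OF gg gg] .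
  also have "... = abs_z2 f"
  proof -
    have "z2_rel (\<lambda>n. g n * g n) f" unfolding z2_rel_def using g sf z2_seq_mult by blast
    thus ?thesis using Quotient_rel[OF Quotient_z2] by blast
  qed
  finally show ?thesis using f by blast
qed

lemma odd_mod8: assumes "odd (a::int)" shows "a mod 8 \<in> {1,3,5,7}"
proof -
  have "a mod 2 = 1" using assms by (simp add: odd_iff_mod_2_eq_one)
  hence "a mod 8 = 1 \<or> a mod 8 = 3 \<or> a mod 8 = 5 \<or> a mod 8 = 7" by presburger
  thus ?thesis by blast
qed

lemma unit_class: assumes "zc 1 u 1" shows "\<exists>d\<in>{1,3,5,7::int}. \<exists>y. u * of_int d = y * y"
proof -
  obtain a where a: "zc 3 u a" using zc_exists by blast
  have "zc 1 u a" using zc_mono[OF _ a] by simp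
  hence "[a = 1] (mod 2^1)" using zc_unique assms by blast
  hence "a mod 2 = 1" by (simp add: cong_def)
  hence "odd a" by presburger
  define d where "d = a mod 8"
  have d: "d \<in> {1,3,5,7}" using odd_mod8[OF \<open>odd a\<close>] by (simp add: d_def)
  have "[a = d] (mod 8)" by (simp add: d_def cong_def)
  hence "[a * d = d * d] (mod 8)" by (simp add: cong_mult)
  moreover have "[d * d = 1] (mod 8)" using d by (auto simp: cong_def)
  ultimately have "[a * d = 1] (mod 2^3)" using cong_trans by simp
  hence z3: "zc 3 (u * of_int d) 1" using zc_cong[OF zc_mult[OF a zc_of_int]] by blast
  obtain y where "y * y = u * of_int d" using z2_sqrt[OF z3] by blast
  thus ?thesis using d by (intro bexI[of _ d] exI[of _ y]) simp_all
qed

lemma zc_1_nz: "zc 1 u 1 \<Longrightarrow> u \<noteq> 0"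
  using zc_unique[of 1 0 1 0] zc_zero by (auto simp: cong_def)

lemma z2Q_add: "z2_to_Q2 (a + b) = z2_to_Q2 a + z2_to_Q2 b"
  by (simp add: z2_to_Q2_def)
lemma z2Q_mult: "z2_to_Q2 (a * b) = z2_to_Q2 a * z2_to_Q2 b"
  by (simp add: z2_to_Q2_def)
lemma z2Q_uminus: "z2_to_Q2 (- a) = - z2_to_Q2 a"
  by (simp add: z2_to_Q2_def)
lemma z2Q_0: "z2_to_Q2 0 = 0"
  by (simp add: z2_to_Q2_def fract_collapse)
lemma z2Q_1: "z2_to_Q2 1 = 1"
  by (simp add: z2_to_Q2_def fract_collapse)
lemma z2Q_eq: "z2_to_Q2 a = z2_to_Q2 b \<longleftrightarrow> a = b"
  by (simp add: z2_to_Q2_def eq_fract)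
lemma z2Q_power: "z2_to_Q2 (a ^ n) = z2_to_Q2 a ^ n"
  by (induction n) (simp_all add: z2Q_1 z2Q_mult)
lemma z2Q_of_nat: "z2_to_Q2 (of_nat n) = of_nat n"
  by (simp add: z2_to_Q2_def Fract_of_nat_eq)
lemma z2Q_of_int: "z2_to_Q2 (of_int k) = of_int k"
proof (cases k rule: int_cases)
  case (nonneg m) then show ?thesis using z2Q_of_nat by simp
next
  case (neg m) then show ?thesis using z2Q_of_nat[of "Suc m"] z2Q_uminus by (metis of_int_minus of_int_of_nat_eq)
qed

lemma Q2_class:
  assumes "z \<noteq> 0"
  shows "\<exists>c\<in>{1,3,5,7,2,6,10,14::int}. \<exists>q. q \<noteq> 0 \<and> z2_to_Q2 z = of_int c * q^2"
proof -
  obtain k u where ku: "z = 2^k * u" "zc 1 u 1" using z2_decomp[OF assms] by blast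
  obtain d y where dy: "d \<in> {1,3,5,7::int}" "u * of_int d = y * y" using unit_class[OF ku(2)] by blast
  have u0: "u \<noteq> 0" using zc_1_nz ku(2) .
  define U where "U = z2_to_Q2 u"
  define Y where "Y = z2_to_Q2 y"
  define D where "D = (of_int d :: Q2)"
  have D0: "D \<noteq> 0" using dy(1) by (auto simp: D_def)
  have U0: "U \<noteq> 0" using u0 z2Q_eq[of u 0] by (simp add: U_def z2Q_0)
  have UD: "U * D = Y * Y" using arg_cong[OF dy(2), of z2_to_Q2]
    by (simp add: U_def Y_def D_def z2Q_mult z2Q_of_int)
  have Y0: "Y \<noteq> 0" using UD U0 D0 by auto
  define W where "W = Y / D"
  have YW: "Y = D * W" using D0 by (simp add: W_def)
  have "U * D = (D * W^2) * D" using UD by (simp add: YW power2_eq_square ac_simps)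
  hence Ueq: "U = D * W^2" using D0 by simp
  define r where "r = k mod 2"
  define j where "j = k div 2"
  have k: "k = r + 2 * j" by (simp add: r_def j_def)
  have two: "z2_to_Q2 (2::z2) = 2" using z2Q_of_int[of 2] by simp
  have "z2_to_Q2 z = 2^k * U" using ku(1) by (simp add: U_def z2Q_mult z2Q_power two)
  also have "... = (2^r * D) * (2^j * W)^2"
  proof -
    have hk: "(2::Q2)^k = 2^r * (2^j)^2" by (simp only: k power_add power_mult mult.commute[of 2 j])
    show ?thesis by (simp only: hk Ueq power_mult_distrib mult_ac)
  qed
  finally have E: "z2_to_Q2 z = of_int (2^r * d) * (2^j * W)^2" by (simp add: D_def)
  have "r = 0 \<or> r = 1" by (auto simp: r_def)
  hence "2^r * d \<in> {1,3,5,7,2,6,10,14}" using dy(1) by auto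
  moreover have "2^j * W \<noteq> 0" using Y0 D0 by (simp add: W_def)
  ultimately show ?thesis using E by blast
qed

lemma Q2_int_sqrt: assumes "t mod 8 = 1" shows "\<exists>q::Q2. q^2 = of_int t"
proof -
  have "[t = 1] (mod 2^3)" using assms by (simp add: cong_def)
  hence z3: "zc 3 (of_int t) 1" using zc_cong[OF zc_of_int] by blast
  obtain y :: z2 where "y * y = of_int t" using z2_sqrt[OF z3] by blast
  hence "z2_to_Q2 y ^ 2 = of_int t" by (metis z2Q_mult z2Q_of_int power2_eq_square)
  thus ?thesis by blast
qed

lemma sum4: "(\<Sum>i<4::nat. f i) = f 0 + f 1 + f 2 + f 3"
  by (simp add: lessThan_nat_numeral add.commute add.left_commute)

lemma qe_refl: "a \<simeq>\<^sub>q a"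
  unfolding quad_equiv_def by (intro exI[of _ 1] exI[of _ "\<lambda>_. 1"] exI[of _ id]) simp

lemma qe_sym: assumes "a \<simeq>\<^sub>q b" shows "b \<simeq>\<^sub>q a"
proof -
  obtain \<alpha> s \<sigma> where h: "\<alpha> \<noteq> 0" "\<forall>i<4. s i \<noteq> 0" "\<sigma> permutes {..<4}"
    "\<forall>i<4. a ! i = \<alpha> * b ! (\<sigma> i) * (s i)^2"
    using assms unfolding quad_equiv_def by blast
  define \<tau> where "\<tau> = inv \<sigma>"
  have tp: "\<tau> permutes {..<4}" using permutes_inv[OF h(3)] by (simp add: \<tau>_def)
  have t4: "\<tau> j < 4" if "j < 4" for j using permutes_in_image[OF tp, of j] that by simp
  have st: "\<sigma> (\<tau> j) = j" for j using permutes_inverses(1)[OF h(3)] by (simp add: \<tau>_def)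
  show ?thesis unfolding quad_equiv_def
  proof (intro exI[of _ "inverse \<alpha>"] exI[of _ "\<lambda>j. inverse (s (\<tau> j))"] exI[of _ \<tau>] conjI allI impI)
    show "inverse \<alpha> \<noteq> 0" using h(1) by simp
    show "\<tau> permutes {..<4}" by fact
    fix j :: nat assume j: "j < 4"
    show "inverse (s (\<tau> j)) \<noteq> 0" using h(2) t4[OF j] by simp
    have sj: "s (\<tau> j) \<noteq> 0" using h(2) t4[OF j] by simp
    have "a ! (\<tau> j) = \<alpha> * b ! (\<sigma> (\<tau> j)) * (s (\<tau> j))^2" using h(4) t4[OF j] by blast
    hence ea: "a ! (\<tau> j) = \<alpha> * b ! j * (s (\<tau> j))^2" by (simp only: st)
    show "b ! j = inverse \<alpha> * a ! (\<tau> j) * (inverse (s (\<tau> j)))^2"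
      unfolding ea using h(1) sj by (simp add: field_simps)
  qed
qed

lemma qe_trans: assumes "a \<simeq>\<^sub>q b" "b \<simeq>\<^sub>q c" shows "a \<simeq>\<^sub>q c"
proof -
  obtain \<alpha> s \<sigma> where h: "\<alpha> \<noteq> 0" "\<forall>i<4. s i \<noteq> 0" "\<sigma> permutes {..<4}"
    "\<forall>i<4. a ! i = \<alpha> * b ! (\<sigma> i) * (s i)^2"
    using assms(1) unfolding quad_equiv_def by blast
  obtain \<beta> t \<tau> where g: "\<beta> \<noteq> 0" "\<forall>i<4. t i \<noteq> 0" "\<tau> permutes {..<4}"
    "\<forall>i<4. b ! i = \<beta> * c ! (\<tau> i) * (t i)^2"
    using assms(2) unfolding quad_equiv_def by blast
  have s4: "\<sigma> i < 4" if "i < 4" for i using permutes_in_image[OF h(3), of i] that by simp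
  show ?thesis unfolding quad_equiv_def
  proof (intro exI[of _ "\<alpha> * \<beta>"] exI[of _ "\<lambda>i. t (\<sigma> i) * s i"] exI[of _ "\<tau> \<circ> \<sigma>"] conjI allI impI)
    show "\<alpha> * \<beta> \<noteq> 0" using h(1) g(1) by simp
    show "\<tau> \<circ> \<sigma> permutes {..<4}" using permutes_compose[OF h(3) g(3)] .
    fix i :: nat assume i: "i < 4"
    show "t (\<sigma> i) * s i \<noteq> 0" using h(2) g(2) i s4[OF i] by simp
    have "a ! i = \<alpha> * (\<beta> * c ! (\<tau> (\<sigma> i)) * (t (\<sigma> i))^2) * (s i)^2"
      using h(4) g(4) i s4[OF i] by simp
    thus "a ! i = \<alpha> * \<beta> * c ! ((\<tau> \<circ> \<sigma>) i) * (t (\<sigma> i) * s i)^2"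
      by (simp add: power_mult_distrib ac_simps)
  qed
qed

lemma hrp_transfer: assumes "a \<simeq>\<^sub>q b" "has_rational_point b" shows "has_rational_point a"
proof -
  obtain \<alpha> s \<sigma> where h: "\<alpha> \<noteq> 0" "\<forall>i<4. s i \<noteq> 0" "\<sigma> permutes {..<4}"
    "\<forall>i<4. a ! i = \<alpha> * b ! (\<sigma> i) * (s i)^2"
    using assms(1) unfolding quad_equiv_def by blast
  obtain x where x: "length x = 4" "\<exists>i<4. x ! i \<noteq> 0" "(\<Sum>i<4. b ! i * (x ! i)^2) = 0"
    using assms(2) unfolding has_rational_point_def by blast
  have s4: "\<sigma> i < 4" if "i < 4" for i using permutes_in_image[OF h(3), of i] that by simp
  define y where "y = map (\<lambda>i. x ! (\<sigma> i) / s i) [0..<4]"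
  have y: "y ! i = x ! (\<sigma> i) / s i" if "i < 4" for i using that by (simp add: y_def)
  show ?thesis unfolding has_rational_point_def
  proof (intro exI[of _ y] conjI)
    show "length y = 4" by (simp add: y_def)
    obtain j where j: "j < 4" "x ! j \<noteq> 0" using x(2) by blast
    define i where "i = inv \<sigma> j"
    have i4: "i < 4" using permutes_in_image[OF permutes_inv[OF h(3)], of j] j by (simp add: i_def)
    have "\<sigma> i = j" using permutes_inverses(1)[OF h(3)] by (simp add: i_def)
    hence "y ! i \<noteq> 0" using y[OF i4] j h(2) i4 by simp
    thus "\<exists>i<4. y ! i \<noteq> 0" using i4 by blast
    have "(\<Sum>i<4. a ! i * (y ! i)^2) = (\<Sum>i<4. \<alpha> * (b ! (\<sigma> i) * (x ! (\<sigma> i))^2))"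
    proof (rule sum.cong)
      fix i assume "i \<in> {..<4::nat}"
      hence i: "i < 4" by simp
      have ai: "a ! i = \<alpha> * b ! (\<sigma> i) * (s i)^2" using h(4) i by blast
      have si: "s i \<noteq> 0" using h(2) i by blast
      show "a ! i * (y ! i)^2 = \<alpha> * (b ! (\<sigma> i) * (x ! (\<sigma> i))^2)"
        unfolding ai y[OF i] using si by (simp add: power_divide)
    qed simp
    also have "... = \<alpha> * (\<Sum>i<4. ((\<lambda>j. b ! j * (x ! j)^2) \<circ> \<sigma>) i)"
      by (simp add: sum_distrib_left)
    also have "... = \<alpha> * (\<Sum>j<4. b ! j * (x ! j)^2)"
      using sum.permute[OF h(3), of "\<lambda>j. b ! j * (x ! j)^2"] by simp
    also have "... = 0" using x(3) by simp
    finally show "(\<Sum>i<4. a ! i * (y ! i)^2) = 0" .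
  qed
qed

lemma hrp_equiv: "a \<simeq>\<^sub>q b \<Longrightarrow> has_rational_point a \<longleftrightarrow> has_rational_point b"
  using hrp_transfer qe_sym by blast

subsection \<open>Witnesses\<close>

lemma Q2_of_int_nz: "(of_int t :: Q2) = 0 \<longleftrightarrow> t = 0"
  by simp

lemma Q2_sqrt_nz: assumes "t mod 8 = 1" shows "\<exists>q::Q2. q \<noteq> 0 \<and> q^2 = of_int t"
proof -
  obtain q :: Q2 where q: "q^2 = of_int t" using Q2_int_sqrt[OF assms] by blast
  have "t \<noteq> 0" using assms by auto
  hence "q \<noteq> 0" using q by auto
  thus ?thesis using q by blast
qed

lemma hrp_wit:
  fixes c xs :: "int list"
  assumes lc: "length c = 4" and lx: "length xs = 4" and j: "j < 4" and xj: "xs ! j = 0"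
    and t: "t mod 8 = 1"
    and eq: "(\<Sum>i<4. c ! i * (xs ! i)^2) + c ! j * 4^k * t = 0"
  shows "has_rational_point (map of_int c :: Q2 list)"
proof -
  obtain q :: Q2 where q: "q \<noteq> 0" "q^2 = of_int t" using Q2_sqrt_nz[OF t] by blast
  define X where "X = (map of_int xs :: Q2 list)[j := 2^k * q]"
  have X: "X ! i = (if i = j then 2^k * q else of_int (xs ! i))" if "i < 4" for i
    using that lx j by (simp add: X_def nth_list_update)
  show ?thesis unfolding has_rational_point_def
  proof (intro exI[of _ X] conjI)
    show "length X = 4" using lx by (simp add: X_def)
    show "\<exists>i<4. X ! i \<noteq> 0" using X[OF j] q(1) j by auto
    have "(\<Sum>i<4. map of_int c ! i * (X ! i)^2) =
          (\<Sum>i<4. of_int (c ! i * (xs ! i)^2) + (if i = j then of_int (c ! j * 4^k * t) else (0::Q2)))"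
    proof (rule sum.cong)
      fix i assume "i \<in> {..<4::nat}"
      hence i: "i < 4" by simp
      have f4: "(2::Q2)^k * 2^k = 4^k" by (simp add: power_mult_distrib[symmetric])
      have p: "((2::Q2)^k * q)^2 = 4^k * of_int t"
        unfolding q(2)[symmetric] f4[symmetric] by (simp add: power2_eq_square ac_simps)
      show "map of_int c ! i * (X ! i)^2 =
          of_int (c ! i * (xs ! i)^2) + (if i = j then of_int (c ! j * 4^k * t) else (0::Q2))"
        using X[OF i] i lc xj p by (cases "i = j") simp_all
    qed simp
    also have "... = of_int ((\<Sum>i<4. c ! i * (xs ! i)^2) + c ! j * 4^k * t)"
      using j by (simp add: sum.distrib)
    also have "... = 0" using eq by simp
    finally show "(\<Sum>i<4. map of_int c ! i * (X ! i)^2) = 0" .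
  qed
qed

lemma sq_ratio:
  fixes c \<alpha> \<beta> t :: int
  assumes "\<beta> \<noteq> 0" "t mod 8 = 1" "c * \<alpha> * \<beta> = 4^k * t"
  shows "\<exists>s::Q2. s \<noteq> 0 \<and> of_int c = of_int \<alpha> * of_int \<beta> * s^2"
proof -
  obtain q :: Q2 where q: "q \<noteq> 0" "q^2 = of_int t" using Q2_sqrt_nz[OF assms(2)] by blast
  have t0: "t \<noteq> 0" using assms(2) by auto
  hence a0: "\<alpha> \<noteq> 0" and c0: "c \<noteq> 0" using assms(3) by auto
  define A where "A = (of_int \<alpha> :: Q2)"
  define B where "B = (of_int \<beta> :: Q2)"
  define C where "C = (of_int c :: Q2)"
  have A0: "A \<noteq> 0" and B0: "B \<noteq> 0" using a0 assms(1) by (simp_all add: A_def B_def)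
  have CAB: "C * A * B = (2^k * q)^2"
  proof -
    have "C * A * B = of_int (4^k * t)" unfolding A_def B_def C_def using assms(3)
      by (metis of_int_mult)
    also have "... = 4^k * q^2" using q(2) by simp
    also have "... = (2^k * q)^2"
    proof -
      have f4: "(2::Q2)^k * 2^k = 4^k" by (simp add: power_mult_distrib[symmetric])
      show ?thesis unfolding f4[symmetric] by (simp add: power2_eq_square ac_simps)
    qed
    finally show ?thesis .
  qed
  define s where "s = 2^k * q / (A * B)"
  have "A * B * s^2 = (2^k*q)^2 / (A * B)" using A0 B0
    by (simp add: s_def power_divide power2_eq_square)
  also have "... = C" using CAB A0 B0 by (simp add: field_simps)
  finally have "C = A * B * s^2" by simp
  moreover have "s \<noteq> 0" using q(1) A0 B0 by (simp add: s_def)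
  ultimately show ?thesis unfolding A_def B_def C_def by blast
qed

definition perm4 :: "nat list \<Rightarrow> nat \<Rightarrow> nat" where
  "perm4 p i = (if i < 4 then p ! i else i)"

lemma perm4_permutes:
  assumes "length p = 4" "distinct p" "set p \<subseteq> {..<4}"
  shows "perm4 p permutes {..<4}"
proof (rule bij_imp_permutes)
  have ss: "set p = {..<4}"
    using assms card_subset_eq[of "{..<4}" "set p"] distinct_card[of p] by simp
  have "inj_on (nth p) {..<4}" using inj_on_nth[OF assms(2)] assms(1) by simp
  hence inj: "inj_on (perm4 p) {..<4}" by (simp add: inj_on_def perm4_def)
  have "perm4 p ` {..<4} = set p" using assms(1) by (auto simp: perm4_def set_conv_nth)
  thus "bij_betw (perm4 p) {..<4} {..<4}" using inj ss by (simp add: bij_betw_def)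
  show "\<And>x. x \<notin> {..<4} \<Longrightarrow> perm4 p x = x" by (simp add: perm4_def)
qed

lemma qe_wit:
  fixes c b :: "int list" and \<alpha> :: int and p :: "nat list"
  assumes lc: "length c = 4" and lb: "length b = 4" and a0: "\<alpha> \<noteq> 0"
    and lp: "length p = 4" "distinct p" "set p \<subseteq> {..<4}"
    and h: "\<forall>i<4. b ! (p ! i) \<noteq> 0 \<and> (\<exists>k t. t mod 8 = 1 \<and> c ! i * \<alpha> * b ! (p ! i) = 4^k * t)"
  shows "(map of_int c :: Q2 list) \<simeq>\<^sub>q map of_int b"
proof -
  have ex: "\<forall>i\<in>{..<4}. \<exists>s::Q2. s \<noteq> 0 \<and> of_int (c ! i) = of_int \<alpha> * of_int (b ! (p ! i)) * s^2"
    using h sq_ratio by blast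
  obtain f :: "nat \<Rightarrow> Q2" where f: "\<forall>i\<in>{..<4}. f i \<noteq> 0 \<and> of_int (c ! i) = of_int \<alpha> * of_int (b ! (p ! i)) * (f i)^2"
    using bchoice[OF ex] by blast
  have p4: "p ! i < 4" if "i < 4" for i
  proof -
    have "p ! i \<in> set p" using that lp(1) by simp
    thus ?thesis using lp(3) by auto
  qed
  show ?thesis unfolding quad_equiv_def
  proof (intro exI[of _ "of_int \<alpha> :: Q2"] exI[of _ f] exI[of _ "perm4 p"] conjI allI impI)
    show "(of_int \<alpha> :: Q2) \<noteq> 0" using a0 by simp
    show "perm4 p permutes {..<4}" using perm4_permutes[OF lp] .
    fix i :: nat assume i: "i < 4"
    show "f i \<noteq> 0" using f i by simp
    show "map of_int c ! i = of_int \<alpha> * map of_int b ! perm4 p i * (f i)^2"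
      using f i lc lb p4[OF i] by (simp add: perm4_def)
  qed
qed

subsection \<open>Anisotropy\<close>

lemma zc_2v: assumes "y = 2 * v" "\<not> zc (Suc n) y 0" shows "\<not> zc n v 0"
proof
  assume "zc n v 0"
  then obtain w where "v = 2^n * w" using zc_div by blast
  hence "y = 2^Suc n * w" using assms(1) by simp
  thus False using assms(2) zc_pow_mult[of "Suc n" w] by simp
qed

lemma z2_four_nz: "(4::z2) \<noteq> 0"
  by simp

lemma descent:
  fixes b0 b1 b2 b3 :: int
  assumes "of_int b0 * y0^2 + of_int b1 * y1^2 + of_int b2 * y2^2 + of_int b3 * y3^2 = (0::z2)"
    and "\<not> zc n y0 0 \<or> \<not> zc n y1 0 \<or> \<not> zc n y2 0 \<or> \<not> zc n y3 0"
  shows "\<exists>w0 w1 w2 w3. of_int b0 * w0^2 + of_int b1 * w1^2 + of_int b2 * w2^2 + of_int b3 * w3^2 = (0::z2)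
     \<and> (zc 1 w0 1 \<or> zc 1 w1 1 \<or> zc 1 w2 1 \<or> zc 1 w3 1)"
  using assms
proof (induction n arbitrary: y0 y1 y2 y3)
  case 0 then show ?case using zc_0_triv by blast
next
  case (Suc n)
  show ?case
  proof (cases "zc 1 y0 1 \<or> zc 1 y1 1 \<or> zc 1 y2 1 \<or> zc 1 y3 1")
    case True then show ?thesis using Suc.prems(1) by blast
  next
    case False
    hence "zc 1 y0 0" "zc 1 y1 0" "zc 1 y2 0" "zc 1 y3 0" using zc_mod2 by blast+
    then obtain v0 v1 v2 v3 where v: "y0 = 2 * v0" "y1 = 2 * v1" "y2 = 2 * v2" "y3 = 2 * v3"
      using zc_div[of 1] by (metis power_one_right)
    have "4 * (of_int b0 * v0^2 + of_int b1 * v1^2 + of_int b2 * v2^2 + of_int b3 * v3^2) = (0::z2)"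
      using Suc.prems(1) unfolding v by (simp add: power_mult_distrib algebra_simps)
    hence "(4::z2) = 0 \<or> of_int b0 * v0^2 + of_int b1 * v1^2 + of_int b2 * v2^2 + of_int b3 * v3^2 = (0::z2)"
      by (simp only: mult_eq_0_iff)
    hence e: "of_int b0 * v0^2 + of_int b1 * v1^2 + of_int b2 * v2^2 + of_int b3 * v3^2 = (0::z2)"
      using z2_four_nz by blast
    have "\<not> zc n v0 0 \<or> \<not> zc n v1 0 \<or> \<not> zc n v2 0 \<or> \<not> zc n v3 0"
      using Suc.prems(2) zc_2v v by blast
    thus ?thesis using Suc.IH[OF e] by blast
  qed
qed

lemma sq16: "((y::int)^2 mod 16 \<in> {0,4} \<and> even y) \<or> (y^2 mod 16 \<in> {1,9} \<and> odd y)"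
proof -
  define r where "r = y mod 8"
  define q where "q = y div 8"
  have y: "y = 8 * q + r" by (simp add: r_def q_def)
  have "y^2 = r^2 + 16 * (4 * q^2 + q * r)" by (simp add: y power2_eq_square algebra_simps)
  hence m: "y^2 mod 16 = r^2 mod 16" by (simp only: mod_mult_self2)
  have ev: "even y \<longleftrightarrow> even r" by (simp add: y)
  have "r \<in> {0..7}" by (simp add: r_def)
  hence "r = 0 \<or> r = 1 \<or> r = 2 \<or> r = 3 \<or> r = 4 \<or> r = 5 \<or> r = 6 \<or> r = 7" by auto
  thus ?thesis using m ev by auto
qed

lemma aniso_int:
  fixes b0 b1 b2 b3 :: int
  assumes H: "\<forall>s0\<in>{0,1,4,9}. \<forall>s1\<in>{0,1,4,9}. \<forall>s2\<in>{0,1,4,9}. \<forall>s3\<in>{0,1,4,9::int}.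
      (b0 * s0 + b1 * s1 + b2 * s2 + b3 * s3) mod 16 = 0 \<longrightarrow> s0 \<in> {0,4} \<and> s1 \<in> {0,4} \<and> s2 \<in> {0,4} \<and> s3 \<in> {0,4}"
    and c: "[b0 * y0^2 + b1 * y1^2 + b2 * y2^2 + b3 * y3^2 = 0] (mod 16)"
  shows "even y0 \<and> even y1 \<and> even y2 \<and> even y3"
proof -
  have "[b0 * (y0^2 mod 16) + b1 * (y1^2 mod 16) + b2 * (y2^2 mod 16) + b3 * (y3^2 mod 16)
      = b0 * y0^2 + b1 * y1^2 + b2 * y2^2 + b3 * y3^2] (mod 16)"
    by (intro cong_add cong_mult cong_refl) (simp_all add: cong_def)
  hence "[b0 * (y0^2 mod 16) + b1 * (y1^2 mod 16) + b2 * (y2^2 mod 16) + b3 * (y3^2 mod 16) = 0] (mod 16)"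
    using c cong_trans by blast
  hence z: "(b0 * (y0^2 mod 16) + b1 * (y1^2 mod 16) + b2 * (y2^2 mod 16) + b3 * (y3^2 mod 16)) mod 16 = 0"
    by (simp add: cong_def)
  have m: "y^2 mod 16 \<in> {0,1,4,9}" for y :: int using sq16[of y] by auto
  have A: "y0^2 mod 16 \<in> {0,4} \<and> y1^2 mod 16 \<in> {0,4} \<and> y2^2 mod 16 \<in> {0,4} \<and> y3^2 mod 16 \<in> {0,4}"
    by (rule H[rule_format, OF m m m m z])
  have ev: "y^2 mod 16 \<in> {0,4} \<Longrightarrow> even y" for y :: int using sq16[of y] by auto
  show ?thesis using ev[OF A[THEN conjunct1]] ev[OF A[THEN conjunct2, THEN conjunct1]]
    ev[OF A[THEN conjunct2, THEN conjunct2, THEN conjunct1]] ev[OF A[THEN conjunct2, THEN conjunct2, THEN conjunct2]]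
    by simp
qed

lemma Fract_common:
  fixes p0 p1 p2 p3 q0 q1 q2 q3 :: z2
  assumes "q0 \<noteq> 0" "q1 \<noteq> 0" "q2 \<noteq> 0" "q3 \<noteq> 0"
  shows "Fract p0 q0 * z2_to_Q2 (q0 * q1 * q2 * q3) = z2_to_Q2 (p0 * q1 * q2 * q3)"
    "Fract p1 q1 * z2_to_Q2 (q0 * q1 * q2 * q3) = z2_to_Q2 (p1 * q0 * q2 * q3)"
    "Fract p2 q2 * z2_to_Q2 (q0 * q1 * q2 * q3) = z2_to_Q2 (p2 * q0 * q1 * q3)"
    "Fract p3 q3 * z2_to_Q2 (q0 * q1 * q2 * q3) = z2_to_Q2 (p3 * q0 * q1 * q2)"
  using assms by (simp_all add: z2_to_Q2_def eq_fract ac_simps)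

lemma aniso:
  fixes b0 b1 b2 b3 :: int
  assumes H: "\<forall>s0\<in>{0,1,4,9}. \<forall>s1\<in>{0,1,4,9}. \<forall>s2\<in>{0,1,4,9}. \<forall>s3\<in>{0,1,4,9::int}.
      (b0 * s0 + b1 * s1 + b2 * s2 + b3 * s3) mod 16 = 0 \<longrightarrow> s0 \<in> {0,4} \<and> s1 \<in> {0,4} \<and> s2 \<in> {0,4} \<and> s3 \<in> {0,4}"
  shows "\<not> has_rational_point (map of_int [b0, b1, b2, b3] :: Q2 list)"
proof
  assume "has_rational_point (map of_int [b0, b1, b2, b3] :: Q2 list)"
  then obtain x :: "Q2 list" where x: "length x = 4" "\<exists>i<4. x ! i \<noteq> 0"
    "(\<Sum>i<4. map of_int [b0, b1, b2, b3] ! i * (x ! i)^2) = 0"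
    unfolding has_rational_point_def by blast
  obtain p0 q0 where pq0: "x ! 0 = Fract p0 q0" "q0 \<noteq> 0" by (cases "x ! 0")
  obtain p1 q1 where pq1: "x ! 1 = Fract p1 q1" "q1 \<noteq> 0" by (cases "x ! 1")
  obtain p2 q2 where pq2: "x ! 2 = Fract p2 q2" "q2 \<noteq> 0" by (cases "x ! 2")
  obtain p3 q3 where pq3: "x ! 3 = Fract p3 q3" "q3 \<noteq> 0" by (cases "x ! 3")
  define Q where "Q = q0 * q1 * q2 * q3"
  have Q0: "Q \<noteq> 0" using pq0 pq1 pq2 pq3 by (simp add: Q_def)
  define y0 where "y0 = p0 * q1 * q2 * q3"
  define y1 where "y1 = p1 * q0 * q2 * q3"
  define y2 where "y2 = p2 * q0 * q1 * q3"
  define y3 where "y3 = p3 * q0 * q1 * q2"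
  note FC = Fract_common[OF pq0(2) pq1(2) pq2(2) pq3(2)]
  have Y: "z2_to_Q2 y0 = x ! 0 * z2_to_Q2 Q" "z2_to_Q2 y1 = x ! 1 * z2_to_Q2 Q"
    "z2_to_Q2 y2 = x ! 2 * z2_to_Q2 Q" "z2_to_Q2 y3 = x ! 3 * z2_to_Q2 Q"
    unfolding pq0(1) pq1(1) pq2(1) pq3(1) y0_def y1_def y2_def y3_def Q_def
    by (rule FC(1)[symmetric], rule FC(2)[symmetric], rule FC(3)[symmetric], rule FC(4)[symmetric])
  have s: "of_int b0 * (x!0)^2 + of_int b1 * (x!1)^2 + of_int b2 * (x!2)^2 + of_int b3 * (x!3)^2 = (0::Q2)"
    using x(3) by (simp add: sum4)
  have "z2_to_Q2 (of_int b0 * y0^2 + of_int b1 * y1^2 + of_int b2 * y2^2 + of_int b3 * y3^2)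
      = (of_int b0 * (x!0)^2 + of_int b1 * (x!1)^2 + of_int b2 * (x!2)^2 + of_int b3 * (x!3)^2) * (z2_to_Q2 Q)^2"
    by (simp add: z2Q_add z2Q_mult z2Q_power z2Q_of_int Y power_mult_distrib algebra_simps)
  also have "... = 0" using s by simp
  finally have e: "of_int b0 * y0^2 + of_int b1 * y1^2 + of_int b2 * y2^2 + of_int b3 * y3^2 = (0::z2)"
    using z2Q_eq[of _ 0] z2Q_0 by metis
  have QQ: "z2_to_Q2 Q \<noteq> 0" using Q0 z2Q_eq[of Q 0] z2Q_0 by simp
  have nz: "\<exists>n. \<not> zc n y 0" if "y \<noteq> 0" for y using zc_eq0 that by blast
  have "y0 \<noteq> 0 \<or> y1 \<noteq> 0 \<or> y2 \<noteq> 0 \<or> y3 \<noteq> 0"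
  proof -
    obtain i where i: "i < 4" "x ! i \<noteq> 0" using x(2) by blast
    hence "i = 0 \<or> i = 1 \<or> i = 2 \<or> i = 3" by auto
    thus ?thesis using i(2) Y QQ z2Q_0 by auto
  qed
  then obtain n where "\<not> zc n y0 0 \<or> \<not> zc n y1 0 \<or> \<not> zc n y2 0 \<or> \<not> zc n y3 0"
    using nz by blast
  then obtain w0 w1 w2 w3 where w:
    "of_int b0 * w0^2 + of_int b1 * w1^2 + of_int b2 * w2^2 + of_int b3 * w3^2 = (0::z2)"
    "zc 1 w0 1 \<or> zc 1 w1 1 \<or> zc 1 w2 1 \<or> zc 1 w3 1"
    using descent[OF e] by blast
  obtain k0 where k0: "zc 4 w0 k0" using zc_exists by blast
  obtain k1 where k1: "zc 4 w1 k1" using zc_exists by blast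
  obtain k2 where k2: "zc 4 w2 k2" using zc_exists by blast
  obtain k3 where k3: "zc 4 w3 k3" using zc_exists by blast
  have "zc 4 (of_int b0 * w0^2 + of_int b1 * w1^2 + of_int b2 * w2^2 + of_int b3 * w3^2)
           (b0 * k0^2 + b1 * k1^2 + b2 * k2^2 + b3 * k3^2)"
    by (intro zc_add zc_mult zc_of_int zc_power k0 k1 k2 k3)
  hence "[b0 * k0^2 + b1 * k1^2 + b2 * k2^2 + b3 * k3^2 = 0] (mod 2^4)"
    using w(1) zc_unique zc_zero by metis
  hence "even k0 \<and> even k1 \<and> even k2 \<and> even k3" using aniso_int[OF H] by simp
  moreover have "odd k" if "zc 4 w k" "zc 1 w 1" for w k
  proof -
    have "zc 1 w k" using zc_mono[OF _ that(1)] by simp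
    hence "[k = 1] (mod 2^1)" using zc_unique that(2) by blast
    thus ?thesis by (simp add: cong_def odd_iff_mod_2_eq_one)
  qed
  ultimately show False using w(2) k0 k1 k2 k3 by blast
qed

lemma aniso_1111: "\<not> has_rational_point [1,1,1,1::Q2]"
  using aniso[of 1 1 1 1] by simp

definition Lq :: "Q2 list list" where
  "Lq = [[1,1,1,1], [1,1,5,5], [1,1,2,2], [1,1,10,10], [1,3,2,6], [1,3,10,14], [1,5,6,14]]"

definition good :: "int list \<Rightarrow> bool" where
  "good c \<longleftrightarrow> has_rational_point (map of_int c :: Q2 list) \<or> (\<exists>b\<in>set Lq. (map of_int c :: Q2 list) \<simeq>\<^sub>q b)"

lemma all4: "(\<forall>i<4::nat. P i) \<longleftrightarrow> P 0 \<and> P 1 \<and> P 2 \<and> P 3"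
proof
  assume "P 0 \<and> P 1 \<and> P 2 \<and> P 3"
  thus "\<forall>i<4::nat. P i" by (auto simp: less_Suc_eq numeral_eq_Suc)
qed simp

lemma qe_wit2:
  fixes c b :: "int list" and \<alpha> :: int and p ks :: "nat list" and ts :: "int list"
  assumes "length c = 4" "length b = 4" "\<alpha> \<noteq> 0" "length p = 4" "distinct p" "set p \<subseteq> {..<4}"
    "\<forall>i<4. b ! (p ! i) \<noteq> 0 \<and> ts ! i mod 8 = 1 \<and> c ! i * \<alpha> * b ! (p ! i) = 4 ^ (ks ! i) * ts ! i"
  shows "(map of_int c :: Q2 list) \<simeq>\<^sub>q map of_int b"
  by (rule qe_wit[OF assms(1-6)]) (use assms(7) in blast)

lemma aniso_L: "b \<in> set Lq \<Longrightarrow> \<not> has_rational_point b"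
proof -
  assume "b \<in> set Lq"
  hence "b = map of_int [1,1,1,1] \<or> b = map of_int [1,1,5,5] \<or> b = map of_int [1,1,2,2] \<or>
    b = map of_int [1,1,10,10] \<or> b = map of_int [1,3,2,6] \<or> b = map of_int [1,3,10,14] \<or>
    b = map of_int [1,5,6,14]" by (simp add: Lq_def)
  moreover have "\<not> has_rational_point (map of_int [1,1,1,1] :: Q2 list)" by (rule aniso) simp
  moreover have "\<not> has_rational_point (map of_int [1,1,5,5] :: Q2 list)" by (rule aniso) simp
  moreover have "\<not> has_rational_point (map of_int [1,1,2,2] :: Q2 list)" by (rule aniso) simp
  moreover have "\<not> has_rational_point (map of_int [1,1,10,10] :: Q2 list)" by (rule aniso) simp
  moreover have "\<not> has_rational_point (map of_int [1,3,2,6] :: Q2 list)" by (rule aniso) simp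
  moreover have "\<not> has_rational_point (map of_int [1,3,10,14] :: Q2 list)" by (rule aniso) simp
  moreover have "\<not> has_rational_point (map of_int [1,5,6,14] :: Q2 list)" by (rule aniso) simp
  ultimately show "\<not> has_rational_point b" by blast
qed

lemma cs_1_1_1_1: "good [1,1,1,1]"
  unfolding good_def
  by (rule disjI2, rule bexI[where x="map of_int [1,1,1,1]"], rule qe_wit2[where \<alpha>=1 and p="[0,1,2,3]" and ks="[0,0,0,0]" and ts="[1,1,1,1]"]) (simp_all add: all4 Lq_def)

lemma cs_1_1_1_2: "good [1,1,1,2]"
  unfolding good_def
  by (rule disjI1, rule hrp_wit[where xs="[0,(-2),(-1),(-1)]" and j=0 and k=0 and t="- 7"]) (simp_all add: sum4)

lemma cs_1_1_1_3: "good [1,1,1,3]"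
  unfolding good_def
  by (rule disjI1, rule hrp_wit[where xs="[0,(-2),0,(-1)]" and j=0 and k=0 and t="- 7"]) (simp_all add: sum4)

lemma cs_1_1_1_5: "good [1,1,1,5]"
  unfolding good_def
  by (rule disjI1, rule hrp_wit[where xs="[0,(-1),(-1),(-1)]" and j=0 and k=0 and t="- 7"]) (simp_all add: sum4)

lemma cs_1_1_1_6: "good [1,1,1,6]"
  unfolding good_def
  by (rule disjI1, rule hrp_wit[where xs="[0,(-1),0,(-1)]" and j=0 and k=0 and t="- 7"]) (simp_all add: sum4)

lemma cs_1_1_1_7: "good [1,1,1,7]"
  unfolding good_def
  by (rule disjI1, rule hrp_wit[where xs="[0,0,0,(-1)]" and j=0 and k=0 and t="- 7"]) (simp_all add: sum4)

lemma cs_1_1_1_10: "good [1,1,1,10]"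
  unfolding good_def
  by (rule disjI1, rule hrp_wit[where xs="[0,(-2),(-1),(-1)]" and j=0 and k=0 and t="- 15"]) (simp_all add: sum4)

lemma cs_1_1_1_14: "good [1,1,1,14]"
  unfolding good_def
  by (rule disjI1, rule hrp_wit[where xs="[0,(-1),0,(-1)]" and j=0 and k=0 and t="- 15"]) (simp_all add: sum4)

lemma cs_1_1_2_2: "good [1,1,2,2]"
  unfolding good_def
  by (rule disjI2, rule bexI[where x="map of_int [1,1,2,2]"], rule qe_wit2[where \<alpha>=1 and p="[0,1,2,3]" and ks="[0,0,1,1]" and ts="[1,1,1,1]"]) (simp_all add: all4 Lq_def)

lemma cs_1_1_2_3: "good [1,1,2,3]"
  unfolding good_def
  by (rule disjI1, rule hrp_wit[where xs="[0,(-2),0,(-1)]" and j=0 and k=0 and t="- 7"]) (simp_all add: sum4)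

lemma cs_1_1_2_5: "good [1,1,2,5]"
  unfolding good_def
  by (rule disjI1, rule hrp_wit[where xs="[0,0,(-1),(-1)]" and j=0 and k=0 and t="- 7"]) (simp_all add: sum4)

lemma cs_1_1_2_6: "good [1,1,2,6]"
  unfolding good_def
  by (rule disjI1, rule hrp_wit[where xs="[0,(-1),0,(-1)]" and j=0 and k=0 and t="- 7"]) (simp_all add: sum4)

lemma cs_1_1_2_7: "good [1,1,2,7]"
  unfolding good_def
  by (rule disjI1, rule hrp_wit[where xs="[0,0,0,(-1)]" and j=0 and k=0 and t="- 7"]) (simp_all add: sum4)

lemma cs_1_1_2_10: "good [1,1,2,10]"
  unfolding good_def
  by (rule disjI1, rule hrp_wit[where xs="[(-2),0,0,(-1)]" and j=2 and k=0 and t="- 7"]) (simp_all add: sum4)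

lemma cs_1_1_2_14: "good [1,1,2,14]"
  unfolding good_def
  by (rule disjI1, rule hrp_wit[where xs="[0,0,0,(-1)]" and j=2 and k=0 and t="- 7"]) (simp_all add: sum4)

lemma cs_1_1_3_3: "good [1,1,3,3]"
  unfolding good_def
  by (rule disjI1, rule hrp_wit[where xs="[0,(-2),(-1),0]" and j=0 and k=0 and t="- 7"]) (simp_all add: sum4)

lemma cs_1_1_3_5: "good [1,1,3,5]"
  unfolding good_def
  by (rule disjI1, rule hrp_wit[where xs="[0,(-2),(-1),0]" and j=0 and k=0 and t="- 7"]) (simp_all add: sum4)

lemma cs_1_1_3_6: "good [1,1,3,6]"
  unfolding good_def
  by (rule disjI1, rule hrp_wit[where xs="[0,(-1),0,(-1)]" and j=0 and k=0 and t="- 7"]) (simp_all add: sum4)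

lemma cs_1_1_3_7: "good [1,1,3,7]"
  unfolding good_def
  by (rule disjI1, rule hrp_wit[where xs="[0,0,0,(-1)]" and j=0 and k=0 and t="- 7"]) (simp_all add: sum4)

lemma cs_1_1_3_10: "good [1,1,3,10]"
  unfolding good_def
  by (rule disjI1, rule hrp_wit[where xs="[0,(-2),(-1),0]" and j=0 and k=0 and t="- 7"]) (simp_all add: sum4)

lemma cs_1_1_3_14: "good [1,1,3,14]"
  unfolding good_def
  by (rule disjI1, rule hrp_wit[where xs="[0,(-1),0,(-1)]" and j=0 and k=0 and t="- 15"]) (simp_all add: sum4)

lemma cs_1_1_5_5: "good [1,1,5,5]"
  unfolding good_def
  by (rule disjI2, rule bexI[where x="map of_int [1,1,5,5]"], rule qe_wit2[where \<alpha>=1 and p="[0,1,2,3]" and ks="[0,0,0,0]" and ts="[1,1,25,25]"]) (simp_all add: all4 Lq_def)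

lemma cs_1_1_5_6: "good [1,1,5,6]"
  unfolding good_def
  by (rule disjI1, rule hrp_wit[where xs="[0,(-1),0,(-1)]" and j=0 and k=0 and t="- 7"]) (simp_all add: sum4)

lemma cs_1_1_5_7: "good [1,1,5,7]"
  unfolding good_def
  by (rule disjI1, rule hrp_wit[where xs="[0,0,0,(-1)]" and j=0 and k=0 and t="- 7"]) (simp_all add: sum4)

lemma cs_1_1_5_10: "good [1,1,5,10]"
  unfolding good_def
  by (rule disjI1, rule hrp_wit[where xs="[0,0,(-1),(-1)]" and j=0 and k=0 and t="- 15"]) (simp_all add: sum4)

lemma cs_1_1_5_14: "good [1,1,5,14]"
  unfolding good_def
  by (rule disjI1, rule hrp_wit[where xs="[0,(-1),0,(-1)]" and j=0 and k=0 and t="- 15"]) (simp_all add: sum4)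

lemma cs_1_1_6_6: "good [1,1,6,6]"
  unfolding good_def
  by (rule disjI1, rule hrp_wit[where xs="[0,(-1),(-1),0]" and j=0 and k=0 and t="- 7"]) (simp_all add: sum4)

lemma cs_1_1_6_7: "good [1,1,6,7]"
  unfolding good_def
  by (rule disjI1, rule hrp_wit[where xs="[0,0,0,(-1)]" and j=0 and k=0 and t="- 7"]) (simp_all add: sum4)

lemma cs_1_1_6_10: "good [1,1,6,10]"
  unfolding good_def
  by (rule disjI1, rule hrp_wit[where xs="[0,(-1),(-1),0]" and j=0 and k=0 and t="- 7"]) (simp_all add: sum4)

lemma cs_1_1_6_14: "good [1,1,6,14]"
  unfolding good_def
  by (rule disjI1, rule hrp_wit[where xs="[0,(-1),(-1),0]" and j=0 and k=0 and t="- 7"]) (simp_all add: sum4)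

lemma cs_1_1_7_7: "good [1,1,7,7]"
  unfolding good_def
  by (rule disjI1, rule hrp_wit[where xs="[0,0,(-1),0]" and j=0 and k=0 and t="- 7"]) (simp_all add: sum4)

lemma cs_1_1_7_10: "good [1,1,7,10]"
  unfolding good_def
  by (rule disjI1, rule hrp_wit[where xs="[0,0,(-1),0]" and j=0 and k=0 and t="- 7"]) (simp_all add: sum4)

lemma cs_1_1_7_14: "good [1,1,7,14]"
  unfolding good_def
  by (rule disjI1, rule hrp_wit[where xs="[0,0,(-1),0]" and j=0 and k=0 and t="- 7"]) (simp_all add: sum4)

lemma cs_1_1_10_10: "good [1,1,10,10]"
  unfolding good_def
  by (rule disjI2, rule bexI[where x="map of_int [1,1,10,10]"], rule qe_wit2[where \<alpha>=1 and p="[0,1,2,3]" and ks="[0,0,1,1]" and ts="[1,1,25,25]"]) (simp_all add: all4 Lq_def)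

lemma cs_1_1_10_14: "good [1,1,10,14]"
  unfolding good_def
  by (rule disjI1, rule hrp_wit[where xs="[0,(-1),0,(-1)]" and j=0 and k=0 and t="- 15"]) (simp_all add: sum4)

lemma cs_1_1_14_14: "good [1,1,14,14]"
  unfolding good_def
  by (rule disjI1, rule hrp_wit[where xs="[0,(-1),(-1),0]" and j=0 and k=0 and t="- 15"]) (simp_all add: sum4)

lemma cs_1_2_2_2: "good [1,2,2,2]"
  unfolding good_def
  by (rule disjI1, rule hrp_wit[where xs="[(-2),0,(-2),(-1)]" and j=1 and k=0 and t="- 7"]) (simp_all add: sum4)

lemma cs_1_2_2_3: "good [1,2,2,3]"
  unfolding good_def
  by (rule disjI1, rule hrp_wit[where xs="[0,(-1),(-1),(-1)]" and j=0 and k=0 and t="- 7"]) (simp_all add: sum4)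

lemma cs_1_2_2_5: "good [1,2,2,5]"
  unfolding good_def
  by (rule disjI1, rule hrp_wit[where xs="[0,(-1),0,(-1)]" and j=0 and k=0 and t="- 7"]) (simp_all add: sum4)

lemma cs_1_2_2_6: "good [1,2,2,6]"
  unfolding good_def
  by (rule disjI1, rule hrp_wit[where xs="[0,0,(-2),(-1)]" and j=1 and k=0 and t="- 7"]) (simp_all add: sum4)

lemma cs_1_2_2_7: "good [1,2,2,7]"
  unfolding good_def
  by (rule disjI1, rule hrp_wit[where xs="[0,0,0,(-1)]" and j=0 and k=0 and t="- 7"]) (simp_all add: sum4)

lemma cs_1_2_2_10: "good [1,2,2,10]"
  unfolding good_def
  by (rule disjI1, rule hrp_wit[where xs="[(-2),0,0,(-1)]" and j=1 and k=0 and t="- 7"]) (simp_all add: sum4)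

lemma cs_1_2_2_14: "good [1,2,2,14]"
  unfolding good_def
  by (rule disjI1, rule hrp_wit[where xs="[0,0,0,(-1)]" and j=1 and k=0 and t="- 7"]) (simp_all add: sum4)

lemma cs_1_2_3_3: "good [1,2,3,3]"
  unfolding good_def
  by (rule disjI1, rule hrp_wit[where xs="[0,0,(-2),(-1)]" and j=0 and k=0 and t="- 15"]) (simp_all add: sum4)

lemma cs_1_2_3_5: "good [1,2,3,5]"
  unfolding good_def
  by (rule disjI1, rule hrp_wit[where xs="[0,(-1),0,(-1)]" and j=0 and k=0 and t="- 7"]) (simp_all add: sum4)

lemma cs_1_2_3_6: "good [1,2,3,6]"
  unfolding good_def
  by (rule disjI2, rule bexI[where x="map of_int [1,3,2,6]"], rule qe_wit2[where \<alpha>=1 and p="[0,2,1,3]" and ks="[0,1,0,1]" and ts="[1,1,9,9]"]) (simp_all add: all4 Lq_def)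

lemma cs_1_2_3_7: "good [1,2,3,7]"
  unfolding good_def
  by (rule disjI1, rule hrp_wit[where xs="[0,0,0,(-1)]" and j=0 and k=0 and t="- 7"]) (simp_all add: sum4)

lemma cs_1_2_3_10: "good [1,2,3,10]"
  unfolding good_def
  by (rule disjI1, rule hrp_wit[where xs="[0,(-1),(-1),(-1)]" and j=0 and k=0 and t="- 15"]) (simp_all add: sum4)

lemma cs_1_2_3_14: "good [1,2,3,14]"
  unfolding good_def
  by (rule disjI1, rule hrp_wit[where xs="[0,0,0,(-1)]" and j=1 and k=0 and t="- 7"]) (simp_all add: sum4)

lemma cs_1_2_5_5: "good [1,2,5,5]"
  unfolding good_def
  by (rule disjI1, rule hrp_wit[where xs="[0,(-1),(-1),0]" and j=0 and k=0 and t="- 7"]) (simp_all add: sum4)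

lemma cs_1_2_5_6: "good [1,2,5,6]"
  unfolding good_def
  by (rule disjI1, rule hrp_wit[where xs="[0,(-1),(-1),0]" and j=0 and k=0 and t="- 7"]) (simp_all add: sum4)

lemma cs_1_2_5_7: "good [1,2,5,7]"
  unfolding good_def
  by (rule disjI1, rule hrp_wit[where xs="[0,0,0,(-1)]" and j=0 and k=0 and t="- 7"]) (simp_all add: sum4)

lemma cs_1_2_5_10: "good [1,2,5,10]"
  unfolding good_def
  by (rule disjI1, rule hrp_wit[where xs="[0,(-1),(-1),0]" and j=0 and k=0 and t="- 7"]) (simp_all add: sum4)

lemma cs_1_2_5_14: "good [1,2,5,14]"
  unfolding good_def
  by (rule disjI1, rule hrp_wit[where xs="[0,0,0,(-1)]" and j=1 and k=0 and t="- 7"]) (simp_all add: sum4)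

lemma cs_1_2_6_6: "good [1,2,6,6]"
  unfolding good_def
  by (rule disjI1, rule hrp_wit[where xs="[0,0,(-2),(-1)]" and j=1 and k=0 and t="- 15"]) (simp_all add: sum4)

lemma cs_1_2_6_7: "good [1,2,6,7]"
  unfolding good_def
  by (rule disjI1, rule hrp_wit[where xs="[0,0,0,(-1)]" and j=0 and k=0 and t="- 7"]) (simp_all add: sum4)

lemma cs_1_2_6_10: "good [1,2,6,10]"
  unfolding good_def
  by (rule disjI1, rule hrp_wit[where xs="[(-2),0,0,(-1)]" and j=1 and k=0 and t="- 7"]) (simp_all add: sum4)

lemma cs_1_2_6_14: "good [1,2,6,14]"
  unfolding good_def
  by (rule disjI1, rule hrp_wit[where xs="[0,0,0,(-1)]" and j=1 and k=0 and t="- 7"]) (simp_all add: sum4)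

lemma cs_1_2_7_7: "good [1,2,7,7]"
  unfolding good_def
  by (rule disjI1, rule hrp_wit[where xs="[0,0,(-1),0]" and j=0 and k=0 and t="- 7"]) (simp_all add: sum4)

lemma cs_1_2_7_10: "good [1,2,7,10]"
  unfolding good_def
  by (rule disjI1, rule hrp_wit[where xs="[0,0,(-1),0]" and j=0 and k=0 and t="- 7"]) (simp_all add: sum4)

lemma cs_1_2_7_14: "good [1,2,7,14]"
  unfolding good_def
  by (rule disjI1, rule hrp_wit[where xs="[0,0,(-1),0]" and j=0 and k=0 and t="- 7"]) (simp_all add: sum4)

lemma cs_1_2_10_10: "good [1,2,10,10]"
  unfolding good_def
  by (rule disjI1, rule hrp_wit[where xs="[(-2),0,(-1),0]" and j=1 and k=0 and t="- 7"]) (simp_all add: sum4)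

lemma cs_1_2_10_14: "good [1,2,10,14]"
  unfolding good_def
  by (rule disjI1, rule hrp_wit[where xs="[0,0,0,(-1)]" and j=1 and k=0 and t="- 7"]) (simp_all add: sum4)

lemma cs_1_2_14_14: "good [1,2,14,14]"
  unfolding good_def
  by (rule disjI1, rule hrp_wit[where xs="[0,0,(-1),0]" and j=1 and k=0 and t="- 7"]) (simp_all add: sum4)

lemma cs_1_3_3_3: "good [1,3,3,3]"
  unfolding good_def
  by (rule disjI1, rule hrp_wit[where xs="[0,(-2),(-1),0]" and j=0 and k=0 and t="- 15"]) (simp_all add: sum4)

lemma cs_1_3_3_5: "good [1,3,3,5]"
  unfolding good_def
  by (rule disjI1, rule hrp_wit[where xs="[0,(-2),(-1),0]" and j=0 and k=0 and t="- 15"]) (simp_all add: sum4)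

lemma cs_1_3_3_6: "good [1,3,3,6]"
  unfolding good_def
  by (rule disjI1, rule hrp_wit[where xs="[0,(-2),(-1),0]" and j=0 and k=0 and t="- 15"]) (simp_all add: sum4)

lemma cs_1_3_3_7: "good [1,3,3,7]"
  unfolding good_def
  by (rule disjI1, rule hrp_wit[where xs="[0,0,0,(-1)]" and j=0 and k=0 and t="- 7"]) (simp_all add: sum4)

lemma cs_1_3_3_10: "good [1,3,3,10]"
  unfolding good_def
  by (rule disjI1, rule hrp_wit[where xs="[0,(-2),(-1),0]" and j=0 and k=0 and t="- 15"]) (simp_all add: sum4)

lemma cs_1_3_3_14: "good [1,3,3,14]"
  unfolding good_def
  by (rule disjI1, rule hrp_wit[where xs="[0,(-2),(-1),0]" and j=0 and k=0 and t="- 15"]) (simp_all add: sum4)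

lemma cs_1_3_5_5: "good [1,3,5,5]"
  unfolding good_def
  by (rule disjI1, rule hrp_wit[where xs="[0,(-1),(-2),0]" and j=0 and k=0 and t="- 23"]) (simp_all add: sum4)

lemma cs_1_3_5_6: "good [1,3,5,6]"
  unfolding good_def
  by (rule disjI1, rule hrp_wit[where xs="[0,(-1),(-2),0]" and j=0 and k=0 and t="- 23"]) (simp_all add: sum4)

lemma cs_1_3_5_7: "good [1,3,5,7]"
  unfolding good_def
  by (rule disjI1, rule hrp_wit[where xs="[0,0,0,(-1)]" and j=0 and k=0 and t="- 7"]) (simp_all add: sum4)

lemma cs_1_3_5_10: "good [1,3,5,10]"
  unfolding good_def
  by (rule disjI1, rule hrp_wit[where xs="[0,0,(-1),(-1)]" and j=0 and k=0 and t="- 15"]) (simp_all add: sum4)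

lemma cs_1_3_5_14: "good [1,3,5,14]"
  unfolding good_def
  by (rule disjI1, rule hrp_wit[where xs="[0,(-1),(-2),0]" and j=0 and k=0 and t="- 23"]) (simp_all add: sum4)

lemma cs_1_3_6_6: "good [1,3,6,6]"
  unfolding good_def
  by (rule disjI1, rule hrp_wit[where xs="[0,(-1),(-1),(-1)]" and j=0 and k=0 and t="- 15"]) (simp_all add: sum4)

lemma cs_1_3_6_7: "good [1,3,6,7]"
  unfolding good_def
  by (rule disjI1, rule hrp_wit[where xs="[0,0,0,(-1)]" and j=0 and k=0 and t="- 7"]) (simp_all add: sum4)

lemma cs_1_3_6_10: "good [1,3,6,10]"
  unfolding good_def
  by (rule disjI1, rule hrp_wit[where xs="[0,0,0,(-3)]" and j=2 and k=0 and t="- 15"]) (simp_all add: sum4)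

lemma cs_1_3_6_14: "good [1,3,6,14]"
  unfolding good_def
  by (rule disjI1, rule hrp_wit[where xs="[0,(-1),(-1),(-1)]" and j=0 and k=0 and t="- 23"]) (simp_all add: sum4)

lemma cs_1_3_7_7: "good [1,3,7,7]"
  unfolding good_def
  by (rule disjI1, rule hrp_wit[where xs="[0,0,(-1),0]" and j=0 and k=0 and t="- 7"]) (simp_all add: sum4)

lemma cs_1_3_7_10: "good [1,3,7,10]"
  unfolding good_def
  by (rule disjI1, rule hrp_wit[where xs="[0,0,(-1),0]" and j=0 and k=0 and t="- 7"]) (simp_all add: sum4)

lemma cs_1_3_7_14: "good [1,3,7,14]"
  unfolding good_def
  by (rule disjI1, rule hrp_wit[where xs="[0,0,(-1),0]" and j=0 and k=0 and t="- 7"]) (simp_all add: sum4)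

lemma cs_1_3_10_10: "good [1,3,10,10]"
  unfolding good_def
  by (rule disjI1, rule hrp_wit[where xs="[0,(-1),(-1),(-1)]" and j=0 and k=0 and t="- 23"]) (simp_all add: sum4)

lemma cs_1_3_10_14: "good [1,3,10,14]"
  unfolding good_def
  by (rule disjI2, rule bexI[where x="map of_int [1,3,10,14]"], rule qe_wit2[where \<alpha>=1 and p="[0,1,2,3]" and ks="[0,0,1,1]" and ts="[1,9,25,49]"]) (simp_all add: all4 Lq_def)

lemma cs_1_3_14_14: "good [1,3,14,14]"
  unfolding good_def
  by (rule disjI1, rule hrp_wit[where xs="[0,(-1),(-1),(-1)]" and j=0 and k=0 and t="- 31"]) (simp_all add: sum4)

lemma cs_1_5_5_5: "good [1,5,5,5]"
  unfolding good_def
  by (rule disjI1, rule hrp_wit[where xs="[0,(-1),(-1),(-1)]" and j=0 and k=0 and t="- 15"]) (simp_all add: sum4)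

lemma cs_1_5_5_6: "good [1,5,5,6]"
  unfolding good_def
  by (rule disjI1, rule hrp_wit[where xs="[0,(-2),(-1),(-1)]" and j=0 and k=0 and t="- 31"]) (simp_all add: sum4)

lemma cs_1_5_5_7: "good [1,5,5,7]"
  unfolding good_def
  by (rule disjI1, rule hrp_wit[where xs="[0,0,0,(-1)]" and j=0 and k=0 and t="- 7"]) (simp_all add: sum4)

lemma cs_1_5_5_10: "good [1,5,5,10]"
  unfolding good_def
  by (rule disjI1, rule hrp_wit[where xs="[0,(-1),0,(-1)]" and j=0 and k=0 and t="- 15"]) (simp_all add: sum4)

lemma cs_1_5_5_14: "good [1,5,5,14]"
  unfolding good_def
  by (rule disjI1, rule hrp_wit[where xs="[0,(-2),(-1),(-1)]" and j=0 and k=0 and t="- 39"]) (simp_all add: sum4)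

lemma cs_1_5_6_6: "good [1,5,6,6]"
  unfolding good_def
  by (rule disjI1, rule hrp_wit[where xs="[0,0,(-3),(-1)]" and j=0 and k=1 and t="- 15"]) (simp_all add: sum4)

lemma cs_1_5_6_7: "good [1,5,6,7]"
  unfolding good_def
  by (rule disjI1, rule hrp_wit[where xs="[0,0,0,(-1)]" and j=0 and k=0 and t="- 7"]) (simp_all add: sum4)

lemma cs_1_5_6_10: "good [1,5,6,10]"
  unfolding good_def
  by (rule disjI1, rule hrp_wit[where xs="[0,(-1),0,(-1)]" and j=0 and k=0 and t="- 15"]) (simp_all add: sum4)

lemma cs_1_5_6_14: "good [1,5,6,14]"
  unfolding good_def
  by (rule disjI2, rule bexI[where x="map of_int [1,5,6,14]"], rule qe_wit2[where \<alpha>=1 and p="[0,1,2,3]" and ks="[0,0,1,1]" and ts="[1,25,9,49]"]) (simp_all add: all4 Lq_def)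

lemma cs_1_5_7_7: "good [1,5,7,7]"
  unfolding good_def
  by (rule disjI1, rule hrp_wit[where xs="[0,0,(-1),0]" and j=0 and k=0 and t="- 7"]) (simp_all add: sum4)

lemma cs_1_5_7_10: "good [1,5,7,10]"
  unfolding good_def
  by (rule disjI1, rule hrp_wit[where xs="[0,0,(-1),0]" and j=0 and k=0 and t="- 7"]) (simp_all add: sum4)

lemma cs_1_5_7_14: "good [1,5,7,14]"
  unfolding good_def
  by (rule disjI1, rule hrp_wit[where xs="[0,0,(-1),0]" and j=0 and k=0 and t="- 7"]) (simp_all add: sum4)

lemma cs_1_5_10_10: "good [1,5,10,10]"
  unfolding good_def
  by (rule disjI1, rule hrp_wit[where xs="[0,(-1),(-1),0]" and j=0 and k=0 and t="- 15"]) (simp_all add: sum4)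

lemma cs_1_5_10_14: "good [1,5,10,14]"
  unfolding good_def
  by (rule disjI1, rule hrp_wit[where xs="[0,(-1),(-1),0]" and j=0 and k=0 and t="- 15"]) (simp_all add: sum4)

lemma cs_1_5_14_14: "good [1,5,14,14]"
  unfolding good_def
  by (rule disjI1, rule hrp_wit[where xs="[0,0,(-1),(-1)]" and j=0 and k=1 and t="- 7"]) (simp_all add: sum4)

lemma cs_1_6_6_6: "good [1,6,6,6]"
  unfolding good_def
  by (rule disjI1, rule hrp_wit[where xs="[0,(-3),(-1),0]" and j=0 and k=1 and t="- 15"]) (simp_all add: sum4)

lemma cs_1_6_6_7: "good [1,6,6,7]"
  unfolding good_def
  by (rule disjI1, rule hrp_wit[where xs="[0,0,0,(-1)]" and j=0 and k=0 and t="- 7"]) (simp_all add: sum4)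

lemma cs_1_6_6_10: "good [1,6,6,10]"
  unfolding good_def
  by (rule disjI1, rule hrp_wit[where xs="[0,0,0,(-3)]" and j=1 and k=0 and t="- 15"]) (simp_all add: sum4)

lemma cs_1_6_6_14: "good [1,6,6,14]"
  unfolding good_def
  by (rule disjI1, rule hrp_wit[where xs="[0,(-3),(-1),0]" and j=0 and k=1 and t="- 15"]) (simp_all add: sum4)

lemma cs_1_6_7_7: "good [1,6,7,7]"
  unfolding good_def
  by (rule disjI1, rule hrp_wit[where xs="[0,0,(-1),0]" and j=0 and k=0 and t="- 7"]) (simp_all add: sum4)

lemma cs_1_6_7_10: "good [1,6,7,10]"
  unfolding good_def
  by (rule disjI1, rule hrp_wit[where xs="[0,0,(-1),0]" and j=0 and k=0 and t="- 7"]) (simp_all add: sum4)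

lemma cs_1_6_7_14: "good [1,6,7,14]"
  unfolding good_def
  by (rule disjI1, rule hrp_wit[where xs="[0,0,(-1),0]" and j=0 and k=0 and t="- 7"]) (simp_all add: sum4)

lemma cs_1_6_10_10: "good [1,6,10,10]"
  unfolding good_def
  by (rule disjI1, rule hrp_wit[where xs="[0,0,(-3),0]" and j=1 and k=0 and t="- 15"]) (simp_all add: sum4)

lemma cs_1_6_10_14: "good [1,6,10,14]"
  unfolding good_def
  by (rule disjI1, rule hrp_wit[where xs="[0,0,(-3),0]" and j=1 and k=0 and t="- 15"]) (simp_all add: sum4)

lemma cs_1_6_14_14: "good [1,6,14,14]"
  unfolding good_def
  by (rule disjI1, rule hrp_wit[where xs="[0,0,(-1),(-1)]" and j=0 and k=1 and t="- 7"]) (simp_all add: sum4)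

lemma cs_1_7_7_7: "good [1,7,7,7]"
  unfolding good_def
  by (rule disjI1, rule hrp_wit[where xs="[0,(-1),0,0]" and j=0 and k=0 and t="- 7"]) (simp_all add: sum4)

lemma cs_1_7_7_10: "good [1,7,7,10]"
  unfolding good_def
  by (rule disjI1, rule hrp_wit[where xs="[0,(-1),0,0]" and j=0 and k=0 and t="- 7"]) (simp_all add: sum4)

lemma cs_1_7_7_14: "good [1,7,7,14]"
  unfolding good_def
  by (rule disjI1, rule hrp_wit[where xs="[0,(-1),0,0]" and j=0 and k=0 and t="- 7"]) (simp_all add: sum4)

lemma cs_1_7_10_10: "good [1,7,10,10]"
  unfolding good_def
  by (rule disjI1, rule hrp_wit[where xs="[0,(-1),0,0]" and j=0 and k=0 and t="- 7"]) (simp_all add: sum4)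

lemma cs_1_7_10_14: "good [1,7,10,14]"
  unfolding good_def
  by (rule disjI1, rule hrp_wit[where xs="[0,(-1),0,0]" and j=0 and k=0 and t="- 7"]) (simp_all add: sum4)

lemma cs_1_7_14_14: "good [1,7,14,14]"
  unfolding good_def
  by (rule disjI1, rule hrp_wit[where xs="[0,(-1),0,0]" and j=0 and k=0 and t="- 7"]) (simp_all add: sum4)

lemma cs_1_10_10_10: "good [1,10,10,10]"
  unfolding good_def
  by (rule disjI1, rule hrp_wit[where xs="[0,(-2),(-1),(-1)]" and j=0 and k=1 and t="- 15"]) (simp_all add: sum4)

lemma cs_1_10_10_14: "good [1,10,10,14]"
  unfolding good_def
  by (rule disjI1, rule hrp_wit[where xs="[(-2),0,(-1),(-2)]" and j=1 and k=0 and t="- 7"]) (simp_all add: sum4)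

lemma cs_1_10_14_14: "good [1,10,14,14]"
  unfolding good_def
  by (rule disjI1, rule hrp_wit[where xs="[0,0,(-1),(-1)]" and j=0 and k=1 and t="- 7"]) (simp_all add: sum4)

lemma cs_1_14_14_14: "good [1,14,14,14]"
  unfolding good_def
  by (rule disjI1, rule hrp_wit[where xs="[0,(-1),(-1),0]" and j=0 and k=1 and t="- 7"]) (simp_all add: sum4)

lemma cs_2_2_2_2: "good [2,2,2,2]"
  unfolding good_def
  by (rule disjI2, rule bexI[where x="map of_int [1,1,1,1]"], rule qe_wit2[where \<alpha>=2 and p="[0,1,2,3]" and ks="[1,1,1,1]" and ts="[1,1,1,1]"]) (simp_all add: all4 Lq_def)

lemma cs_2_2_2_3: "good [2,2,2,3]"
  unfolding good_def
  by (rule disjI1, rule hrp_wit[where xs="[0,(-1),0,(-2)]" and j=0 and k=0 and t="- 7"]) (simp_all add: sum4)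

lemma cs_2_2_2_5: "good [2,2,2,5]"
  unfolding good_def
  by (rule disjI1, rule hrp_wit[where xs="[0,(-2),(-1),(-2)]" and j=0 and k=0 and t="- 15"]) (simp_all add: sum4)

lemma cs_2_2_2_6: "good [2,2,2,6]"
  unfolding good_def
  by (rule disjI1, rule hrp_wit[where xs="[0,(-2),0,(-1)]" and j=0 and k=0 and t="- 7"]) (simp_all add: sum4)

lemma cs_2_2_2_7: "good [2,2,2,7]"
  unfolding good_def
  by (rule disjI1, rule hrp_wit[where xs="[0,(-1),0,(-2)]" and j=0 and k=0 and t="- 15"]) (simp_all add: sum4)

lemma cs_2_2_2_10: "good [2,2,2,10]"
  unfolding good_def
  by (rule disjI1, rule hrp_wit[where xs="[0,(-1),(-1),(-1)]" and j=0 and k=0 and t="- 7"]) (simp_all add: sum4)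

lemma cs_2_2_2_14: "good [2,2,2,14]"
  unfolding good_def
  by (rule disjI1, rule hrp_wit[where xs="[0,0,0,(-1)]" and j=0 and k=0 and t="- 7"]) (simp_all add: sum4)

lemma cs_2_2_3_3: "good [2,2,3,3]"
  unfolding good_def
  by (rule disjI1, rule hrp_wit[where xs="[0,(-1),(-2),0]" and j=0 and k=0 and t="- 7"]) (simp_all add: sum4)

lemma cs_2_2_3_5: "good [2,2,3,5]"
  unfolding good_def
  by (rule disjI1, rule hrp_wit[where xs="[0,(-1),(-2),0]" and j=0 and k=0 and t="- 7"]) (simp_all add: sum4)

lemma cs_2_2_3_6: "good [2,2,3,6]"
  unfolding good_def
  by (rule disjI1, rule hrp_wit[where xs="[0,(-2),0,(-1)]" and j=0 and k=0 and t="- 7"]) (simp_all add: sum4)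

lemma cs_2_2_3_7: "good [2,2,3,7]"
  unfolding good_def
  by (rule disjI1, rule hrp_wit[where xs="[0,(-1),(-2),0]" and j=0 and k=0 and t="- 7"]) (simp_all add: sum4)

lemma cs_2_2_3_10: "good [2,2,3,10]"
  unfolding good_def
  by (rule disjI1, rule hrp_wit[where xs="[0,(-1),(-2),0]" and j=0 and k=0 and t="- 7"]) (simp_all add: sum4)

lemma cs_2_2_3_14: "good [2,2,3,14]"
  unfolding good_def
  by (rule disjI1, rule hrp_wit[where xs="[0,0,0,(-1)]" and j=0 and k=0 and t="- 7"]) (simp_all add: sum4)

lemma cs_2_2_5_5: "good [2,2,5,5]"
  unfolding good_def
  by (rule disjI2, rule bexI[where x="map of_int [1,1,10,10]"], rule qe_wit2[where \<alpha>=2 and p="[0,1,2,3]" and ks="[1,1,1,1]" and ts="[1,1,25,25]"]) (simp_all add: all4 Lq_def)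

lemma cs_2_2_5_6: "good [2,2,5,6]"
  unfolding good_def
  by (rule disjI1, rule hrp_wit[where xs="[0,(-2),0,(-1)]" and j=0 and k=0 and t="- 7"]) (simp_all add: sum4)

lemma cs_2_2_5_7: "good [2,2,5,7]"
  unfolding good_def
  by (rule disjI1, rule hrp_wit[where xs="[0,(-1),(-1),(-1)]" and j=0 and k=0 and t="- 7"]) (simp_all add: sum4)

lemma cs_2_2_5_10: "good [2,2,5,10]"
  unfolding good_def
  by (rule disjI1, rule hrp_wit[where xs="[0,0,(-2),(-1)]" and j=0 and k=0 and t="- 15"]) (simp_all add: sum4)

lemma cs_2_2_5_14: "good [2,2,5,14]"
  unfolding good_def
  by (rule disjI1, rule hrp_wit[where xs="[0,0,0,(-1)]" and j=0 and k=0 and t="- 7"]) (simp_all add: sum4)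

lemma cs_2_2_6_6: "good [2,2,6,6]"
  unfolding good_def
  by (rule disjI1, rule hrp_wit[where xs="[0,(-2),(-1),0]" and j=0 and k=0 and t="- 7"]) (simp_all add: sum4)

lemma cs_2_2_6_7: "good [2,2,6,7]"
  unfolding good_def
  by (rule disjI1, rule hrp_wit[where xs="[0,(-2),(-1),0]" and j=0 and k=0 and t="- 7"]) (simp_all add: sum4)

lemma cs_2_2_6_10: "good [2,2,6,10]"
  unfolding good_def
  by (rule disjI1, rule hrp_wit[where xs="[0,(-2),(-1),0]" and j=0 and k=0 and t="- 7"]) (simp_all add: sum4)

lemma cs_2_2_6_14: "good [2,2,6,14]"
  unfolding good_def
  by (rule disjI1, rule hrp_wit[where xs="[0,0,0,(-1)]" and j=0 and k=0 and t="- 7"]) (simp_all add: sum4)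

lemma cs_2_2_7_7: "good [2,2,7,7]"
  unfolding good_def
  by (rule disjI1, rule hrp_wit[where xs="[0,0,(-1),(-1)]" and j=0 and k=0 and t="- 7"]) (simp_all add: sum4)

lemma cs_2_2_7_10: "good [2,2,7,10]"
  unfolding good_def
  by (rule disjI1, rule hrp_wit[where xs="[0,(-1),(-2),0]" and j=0 and k=0 and t="- 15"]) (simp_all add: sum4)

lemma cs_2_2_7_14: "good [2,2,7,14]"
  unfolding good_def
  by (rule disjI1, rule hrp_wit[where xs="[0,0,0,(-1)]" and j=0 and k=0 and t="- 7"]) (simp_all add: sum4)

lemma cs_2_2_10_10: "good [2,2,10,10]"
  unfolding good_def
  by (rule disjI2, rule bexI[where x="map of_int [1,1,5,5]"], rule qe_wit2[where \<alpha>=2 and p="[0,1,2,3]" and ks="[1,1,1,1]" and ts="[1,1,25,25]"]) (simp_all add: all4 Lq_def)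

lemma cs_2_2_10_14: "good [2,2,10,14]"
  unfolding good_def
  by (rule disjI1, rule hrp_wit[where xs="[0,0,0,(-1)]" and j=0 and k=0 and t="- 7"]) (simp_all add: sum4)

lemma cs_2_2_14_14: "good [2,2,14,14]"
  unfolding good_def
  by (rule disjI1, rule hrp_wit[where xs="[0,0,(-1),0]" and j=0 and k=0 and t="- 7"]) (simp_all add: sum4)

lemma cs_2_3_3_3: "good [2,3,3,3]"
  unfolding good_def
  by (rule disjI1, rule hrp_wit[where xs="[0,(-3),(-1),0]" and j=0 and k=0 and t="- 15"]) (simp_all add: sum4)

lemma cs_2_3_3_5: "good [2,3,3,5]"
  unfolding good_def
  by (rule disjI1, rule hrp_wit[where xs="[0,0,0,(-3)]" and j=1 and k=0 and t="- 15"]) (simp_all add: sum4)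

lemma cs_2_3_3_6: "good [2,3,3,6]"
  unfolding good_def
  by (rule disjI1, rule hrp_wit[where xs="[0,(-3),(-1),0]" and j=0 and k=0 and t="- 15"]) (simp_all add: sum4)

lemma cs_2_3_3_7: "good [2,3,3,7]"
  unfolding good_def
  by (rule disjI1, rule hrp_wit[where xs="[0,(-3),(-1),0]" and j=0 and k=0 and t="- 15"]) (simp_all add: sum4)

lemma cs_2_3_3_10: "good [2,3,3,10]"
  unfolding good_def
  by (rule disjI1, rule hrp_wit[where xs="[0,(-3),(-1),0]" and j=0 and k=0 and t="- 15"]) (simp_all add: sum4)

lemma cs_2_3_3_14: "good [2,3,3,14]"
  unfolding good_def
  by (rule disjI1, rule hrp_wit[where xs="[0,0,0,(-1)]" and j=0 and k=0 and t="- 7"]) (simp_all add: sum4)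

lemma cs_2_3_5_5: "good [2,3,5,5]"
  unfolding good_def
  by (rule disjI1, rule hrp_wit[where xs="[0,0,(-3),0]" and j=1 and k=0 and t="- 15"]) (simp_all add: sum4)

lemma cs_2_3_5_6: "good [2,3,5,6]"
  unfolding good_def
  by (rule disjI1, rule hrp_wit[where xs="[0,(-1),(-1),(-1)]" and j=0 and k=0 and t="- 7"]) (simp_all add: sum4)

lemma cs_2_3_5_7: "good [2,3,5,7]"
  unfolding good_def
  by (rule disjI1, rule hrp_wit[where xs="[0,0,(-3),0]" and j=1 and k=0 and t="- 15"]) (simp_all add: sum4)

lemma cs_2_3_5_10: "good [2,3,5,10]"
  unfolding good_def
  by (rule disjI1, rule hrp_wit[where xs="[0,0,(-2),(-1)]" and j=0 and k=0 and t="- 15"]) (simp_all add: sum4)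

lemma cs_2_3_5_14: "good [2,3,5,14]"
  unfolding good_def
  by (rule disjI1, rule hrp_wit[where xs="[0,0,0,(-1)]" and j=0 and k=0 and t="- 7"]) (simp_all add: sum4)

lemma cs_2_3_6_6: "good [2,3,6,6]"
  unfolding good_def
  by (rule disjI1, rule hrp_wit[where xs="[0,0,(-2),(-1)]" and j=0 and k=0 and t="- 15"]) (simp_all add: sum4)

lemma cs_2_3_6_7: "good [2,3,6,7]"
  unfolding good_def
  by (rule disjI1, rule hrp_wit[where xs="[(-2),0,(-1),(-1)]" and j=1 and k=0 and t="- 7"]) (simp_all add: sum4)

lemma cs_2_3_6_10: "good [2,3,6,10]"
  unfolding good_def
  by (rule disjI1, rule hrp_wit[where xs="[0,0,(-1),(-2)]" and j=0 and k=0 and t="- 23"]) (simp_all add: sum4)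

lemma cs_2_3_6_14: "good [2,3,6,14]"
  unfolding good_def
  by (rule disjI1, rule hrp_wit[where xs="[0,0,0,(-1)]" and j=0 and k=0 and t="- 7"]) (simp_all add: sum4)

lemma cs_2_3_7_7: "good [2,3,7,7]"
  unfolding good_def
  by (rule disjI1, rule hrp_wit[where xs="[0,0,(-1),(-1)]" and j=0 and k=0 and t="- 7"]) (simp_all add: sum4)

lemma cs_2_3_7_10: "good [2,3,7,10]"
  unfolding good_def
  by (rule disjI2, rule bexI[where x="map of_int [1,5,6,14]"], rule qe_wit2[where \<alpha>=2 and p="[0,2,3,1]" and ks="[1,1,1,1]" and ts="[1,9,49,25]"]) (simp_all add: all4 Lq_def)

lemma cs_2_3_7_14: "good [2,3,7,14]"
  unfolding good_def
  by (rule disjI1, rule hrp_wit[where xs="[0,0,0,(-1)]" and j=0 and k=0 and t="- 7"]) (simp_all add: sum4)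

lemma cs_2_3_10_10: "good [2,3,10,10]"
  unfolding good_def
  by (rule disjI1, rule hrp_wit[where xs="[0,(-2),(-2),(-1)]" and j=0 and k=0 and t="- 31"]) (simp_all add: sum4)

lemma cs_2_3_10_14: "good [2,3,10,14]"
  unfolding good_def
  by (rule disjI1, rule hrp_wit[where xs="[0,0,0,(-1)]" and j=0 and k=0 and t="- 7"]) (simp_all add: sum4)

lemma cs_2_3_14_14: "good [2,3,14,14]"
  unfolding good_def
  by (rule disjI1, rule hrp_wit[where xs="[0,0,(-1),0]" and j=0 and k=0 and t="- 7"]) (simp_all add: sum4)

lemma cs_2_5_5_5: "good [2,5,5,5]"
  unfolding good_def
  by (rule disjI1, rule hrp_wit[where xs="[0,(-2),(-1),(-1)]" and j=0 and k=0 and t="- 15"]) (simp_all add: sum4)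

lemma cs_2_5_5_6: "good [2,5,5,6]"
  unfolding good_def
  by (rule disjI1, rule hrp_wit[where xs="[0,(-2),(-2),(-1)]" and j=0 and k=0 and t="- 23"]) (simp_all add: sum4)

lemma cs_2_5_5_7: "good [2,5,5,7]"
  unfolding good_def
  by (rule disjI1, rule hrp_wit[where xs="[(-1),0,(-1),(-2)]" and j=1 and k=0 and t="- 7"]) (simp_all add: sum4)

lemma cs_2_5_5_10: "good [2,5,5,10]"
  unfolding good_def
  by (rule disjI1, rule hrp_wit[where xs="[0,(-2),0,(-1)]" and j=0 and k=0 and t="- 15"]) (simp_all add: sum4)

lemma cs_2_5_5_14: "good [2,5,5,14]"
  unfolding good_def
  by (rule disjI1, rule hrp_wit[where xs="[0,0,0,(-1)]" and j=0 and k=0 and t="- 7"]) (simp_all add: sum4)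

lemma cs_2_5_6_6: "good [2,5,6,6]"
  unfolding good_def
  by (rule disjI1, rule hrp_wit[where xs="[0,0,(-2),(-1)]" and j=0 and k=0 and t="- 15"]) (simp_all add: sum4)

lemma cs_2_5_6_7: "good [2,5,6,7]"
  unfolding good_def
  by (rule disjI2, rule bexI[where x="map of_int [1,3,10,14]"], rule qe_wit2[where \<alpha>=2 and p="[0,2,1,3]" and ks="[1,1,1,1]" and ts="[1,25,9,49]"]) (simp_all add: all4 Lq_def)

lemma cs_2_5_6_10: "good [2,5,6,10]"
  unfolding good_def
  by (rule disjI1, rule hrp_wit[where xs="[0,(-2),0,(-1)]" and j=0 and k=0 and t="- 15"]) (simp_all add: sum4)

lemma cs_2_5_6_14: "good [2,5,6,14]"
  unfolding good_def
  by (rule disjI1, rule hrp_wit[where xs="[0,0,0,(-1)]" and j=0 and k=0 and t="- 7"]) (simp_all add: sum4)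

lemma cs_2_5_7_7: "good [2,5,7,7]"
  unfolding good_def
  by (rule disjI1, rule hrp_wit[where xs="[0,0,(-1),(-1)]" and j=0 and k=0 and t="- 7"]) (simp_all add: sum4)

lemma cs_2_5_7_10: "good [2,5,7,10]"
  unfolding good_def
  by (rule disjI1, rule hrp_wit[where xs="[0,(-2),0,(-1)]" and j=0 and k=0 and t="- 15"]) (simp_all add: sum4)

lemma cs_2_5_7_14: "good [2,5,7,14]"
  unfolding good_def
  by (rule disjI1, rule hrp_wit[where xs="[0,0,0,(-1)]" and j=0 and k=0 and t="- 7"]) (simp_all add: sum4)

lemma cs_2_5_10_10: "good [2,5,10,10]"
  unfolding good_def
  by (rule disjI1, rule hrp_wit[where xs="[0,(-2),(-1),0]" and j=0 and k=0 and t="- 15"]) (simp_all add: sum4)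

lemma cs_2_5_10_14: "good [2,5,10,14]"
  unfolding good_def
  by (rule disjI1, rule hrp_wit[where xs="[0,0,0,(-1)]" and j=0 and k=0 and t="- 7"]) (simp_all add: sum4)

lemma cs_2_5_14_14: "good [2,5,14,14]"
  unfolding good_def
  by (rule disjI1, rule hrp_wit[where xs="[0,0,(-1),0]" and j=0 and k=0 and t="- 7"]) (simp_all add: sum4)

lemma cs_2_6_6_6: "good [2,6,6,6]"
  unfolding good_def
  by (rule disjI1, rule hrp_wit[where xs="[0,(-2),(-1),0]" and j=0 and k=0 and t="- 15"]) (simp_all add: sum4)

lemma cs_2_6_6_7: "good [2,6,6,7]"
  unfolding good_def
  by (rule disjI1, rule hrp_wit[where xs="[0,(-2),(-1),0]" and j=0 and k=0 and t="- 15"]) (simp_all add: sum4)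

lemma cs_2_6_6_10: "good [2,6,6,10]"
  unfolding good_def
  by (rule disjI1, rule hrp_wit[where xs="[0,(-2),(-1),0]" and j=0 and k=0 and t="- 15"]) (simp_all add: sum4)

lemma cs_2_6_6_14: "good [2,6,6,14]"
  unfolding good_def
  by (rule disjI1, rule hrp_wit[where xs="[0,0,0,(-1)]" and j=0 and k=0 and t="- 7"]) (simp_all add: sum4)

lemma cs_2_6_7_7: "good [2,6,7,7]"
  unfolding good_def
  by (rule disjI1, rule hrp_wit[where xs="[0,0,(-1),(-1)]" and j=0 and k=0 and t="- 7"]) (simp_all add: sum4)

lemma cs_2_6_7_10: "good [2,6,7,10]"
  unfolding good_def
  by (rule disjI1, rule hrp_wit[where xs="[0,(-1),0,(-2)]" and j=0 and k=0 and t="- 23"]) (simp_all add: sum4)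

lemma cs_2_6_7_14: "good [2,6,7,14]"
  unfolding good_def
  by (rule disjI1, rule hrp_wit[where xs="[0,0,0,(-1)]" and j=0 and k=0 and t="- 7"]) (simp_all add: sum4)

lemma cs_2_6_10_10: "good [2,6,10,10]"
  unfolding good_def
  by (rule disjI1, rule hrp_wit[where xs="[0,(-1),(-2),0]" and j=0 and k=0 and t="- 23"]) (simp_all add: sum4)

lemma cs_2_6_10_14: "good [2,6,10,14]"
  unfolding good_def
  by (rule disjI1, rule hrp_wit[where xs="[0,0,0,(-1)]" and j=0 and k=0 and t="- 7"]) (simp_all add: sum4)

lemma cs_2_6_14_14: "good [2,6,14,14]"
  unfolding good_def
  by (rule disjI1, rule hrp_wit[where xs="[0,0,(-1),0]" and j=0 and k=0 and t="- 7"]) (simp_all add: sum4)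

lemma cs_2_7_7_7: "good [2,7,7,7]"
  unfolding good_def
  by (rule disjI1, rule hrp_wit[where xs="[0,(-1),(-1),0]" and j=0 and k=0 and t="- 7"]) (simp_all add: sum4)

lemma cs_2_7_7_10: "good [2,7,7,10]"
  unfolding good_def
  by (rule disjI1, rule hrp_wit[where xs="[0,(-1),(-1),0]" and j=0 and k=0 and t="- 7"]) (simp_all add: sum4)

lemma cs_2_7_7_14: "good [2,7,7,14]"
  unfolding good_def
  by (rule disjI1, rule hrp_wit[where xs="[0,0,0,(-1)]" and j=0 and k=0 and t="- 7"]) (simp_all add: sum4)

lemma cs_2_7_10_10: "good [2,7,10,10]"
  unfolding good_def
  by (rule disjI1, rule hrp_wit[where xs="[0,(-2),(-2),(-1)]" and j=0 and k=0 and t="- 39"]) (simp_all add: sum4)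

lemma cs_2_7_10_14: "good [2,7,10,14]"
  unfolding good_def
  by (rule disjI1, rule hrp_wit[where xs="[0,0,0,(-1)]" and j=0 and k=0 and t="- 7"]) (simp_all add: sum4)

lemma cs_2_7_14_14: "good [2,7,14,14]"
  unfolding good_def
  by (rule disjI1, rule hrp_wit[where xs="[0,0,(-1),0]" and j=0 and k=0 and t="- 7"]) (simp_all add: sum4)

lemma cs_2_10_10_10: "good [2,10,10,10]"
  unfolding good_def
  by (rule disjI1, rule hrp_wit[where xs="[0,(-1),(-1),(-1)]" and j=0 and k=0 and t="- 15"]) (simp_all add: sum4)

lemma cs_2_10_10_14: "good [2,10,10,14]"
  unfolding good_def
  by (rule disjI1, rule hrp_wit[where xs="[0,0,0,(-1)]" and j=0 and k=0 and t="- 7"]) (simp_all add: sum4)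

lemma cs_2_10_14_14: "good [2,10,14,14]"
  unfolding good_def
  by (rule disjI1, rule hrp_wit[where xs="[0,0,(-1),0]" and j=0 and k=0 and t="- 7"]) (simp_all add: sum4)

lemma cs_2_14_14_14: "good [2,14,14,14]"
  unfolding good_def
  by (rule disjI1, rule hrp_wit[where xs="[0,(-1),0,0]" and j=0 and k=0 and t="- 7"]) (simp_all add: sum4)

lemma cs_3_3_3_3: "good [3,3,3,3]"
  unfolding good_def
  by (rule disjI2, rule bexI[where x="map of_int [1,1,1,1]"], rule qe_wit2[where \<alpha>=3 and p="[0,1,2,3]" and ks="[0,0,0,0]" and ts="[9,9,9,9]"]) (simp_all add: all4 Lq_def)

lemma cs_3_3_3_5: "good [3,3,3,5]"
  unfolding good_def
  by (rule disjI1, rule hrp_wit[where xs="[0,0,0,(-3)]" and j=0 and k=0 and t="- 15"]) (simp_all add: sum4)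

lemma cs_3_3_3_6: "good [3,3,3,6]"
  unfolding good_def
  by (rule disjI1, rule hrp_wit[where xs="[0,(-2),(-1),(-1)]" and j=0 and k=0 and t="- 7"]) (simp_all add: sum4)

lemma cs_3_3_3_7: "good [3,3,3,7]"
  unfolding good_def
  by (rule disjI1, rule hrp_wit[where xs="[0,(-1),(-1),(-3)]" and j=0 and k=0 and t="- 23"]) (simp_all add: sum4)

lemma cs_3_3_3_10: "good [3,3,3,10]"
  unfolding good_def
  by (rule disjI1, rule hrp_wit[where xs="[0,(-1),0,(-3)]" and j=0 and k=0 and t="- 31"]) (simp_all add: sum4)

lemma cs_3_3_3_14: "good [3,3,3,14]"
  unfolding good_def
  by (rule disjI1, rule hrp_wit[where xs="[0,(-2),(-1),(-3)]" and j=0 and k=0 and t="- 47"]) (simp_all add: sum4)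

lemma cs_3_3_5_5: "good [3,3,5,5]"
  unfolding good_def
  by (rule disjI1, rule hrp_wit[where xs="[0,0,(-3),0]" and j=0 and k=0 and t="- 15"]) (simp_all add: sum4)

lemma cs_3_3_5_6: "good [3,3,5,6]"
  unfolding good_def
  by (rule disjI1, rule hrp_wit[where xs="[0,0,(-3),0]" and j=0 and k=0 and t="- 15"]) (simp_all add: sum4)

lemma cs_3_3_5_7: "good [3,3,5,7]"
  unfolding good_def
  by (rule disjI1, rule hrp_wit[where xs="[0,0,(-3),0]" and j=0 and k=0 and t="- 15"]) (simp_all add: sum4)

lemma cs_3_3_5_10: "good [3,3,5,10]"
  unfolding good_def
  by (rule disjI1, rule hrp_wit[where xs="[0,0,(-3),0]" and j=0 and k=0 and t="- 15"]) (simp_all add: sum4)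

lemma cs_3_3_5_14: "good [3,3,5,14]"
  unfolding good_def
  by (rule disjI1, rule hrp_wit[where xs="[0,0,(-3),0]" and j=0 and k=0 and t="- 15"]) (simp_all add: sum4)

lemma cs_3_3_6_6: "good [3,3,6,6]"
  unfolding good_def
  by (rule disjI2, rule bexI[where x="map of_int [1,1,2,2]"], rule qe_wit2[where \<alpha>=3 and p="[0,1,2,3]" and ks="[0,0,1,1]" and ts="[9,9,9,9]"]) (simp_all add: all4 Lq_def)

lemma cs_3_3_6_7: "good [3,3,6,7]"
  unfolding good_def
  by (rule disjI1, rule hrp_wit[where xs="[0,0,(-1),(-3)]" and j=0 and k=0 and t="- 23"]) (simp_all add: sum4)

lemma cs_3_3_6_10: "good [3,3,6,10]"
  unfolding good_def
  by (rule disjI1, rule hrp_wit[where xs="[0,0,0,(-3)]" and j=2 and k=0 and t="- 15"]) (simp_all add: sum4)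

lemma cs_3_3_6_14: "good [3,3,6,14]"
  unfolding good_def
  by (rule disjI1, rule hrp_wit[where xs="[(-2),0,0,(-3)]" and j=2 and k=0 and t="- 23"]) (simp_all add: sum4)

lemma cs_3_3_7_7: "good [3,3,7,7]"
  unfolding good_def
  by (rule disjI2, rule bexI[where x="map of_int [1,1,5,5]"], rule qe_wit2[where \<alpha>=3 and p="[0,1,2,3]" and ks="[0,0,0,0]" and ts="[9,9,105,105]"]) (simp_all add: all4 Lq_def)

lemma cs_3_3_7_10: "good [3,3,7,10]"
  unfolding good_def
  by (rule disjI1, rule hrp_wit[where xs="[0,(-1),0,(-3)]" and j=0 and k=0 and t="- 31"]) (simp_all add: sum4)

lemma cs_3_3_7_14: "good [3,3,7,14]"
  unfolding good_def
  by (rule disjI1, rule hrp_wit[where xs="[0,0,(-1),(-1)]" and j=0 and k=0 and t="- 7"]) (simp_all add: sum4)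

lemma cs_3_3_10_10: "good [3,3,10,10]"
  unfolding good_def
  by (rule disjI1, rule hrp_wit[where xs="[0,(-1),(-3),0]" and j=0 and k=0 and t="- 31"]) (simp_all add: sum4)

lemma cs_3_3_10_14: "good [3,3,10,14]"
  unfolding good_def
  by (rule disjI1, rule hrp_wit[where xs="[0,(-1),(-3),0]" and j=0 and k=0 and t="- 31"]) (simp_all add: sum4)

lemma cs_3_3_14_14: "good [3,3,14,14]"
  unfolding good_def
  by (rule disjI2, rule bexI[where x="map of_int [1,1,10,10]"], rule qe_wit2[where \<alpha>=3 and p="[0,1,2,3]" and ks="[0,0,1,1]" and ts="[9,9,105,105]"]) (simp_all add: all4 Lq_def)

lemma cs_3_5_5_5: "good [3,5,5,5]"
  unfolding good_def
  by (rule disjI1, rule hrp_wit[where xs="[0,(-3),0,0]" and j=0 and k=0 and t="- 15"]) (simp_all add: sum4)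

lemma cs_3_5_5_6: "good [3,5,5,6]"
  unfolding good_def
  by (rule disjI1, rule hrp_wit[where xs="[0,(-3),0,0]" and j=0 and k=0 and t="- 15"]) (simp_all add: sum4)

lemma cs_3_5_5_7: "good [3,5,5,7]"
  unfolding good_def
  by (rule disjI1, rule hrp_wit[where xs="[0,(-3),0,0]" and j=0 and k=0 and t="- 15"]) (simp_all add: sum4)

lemma cs_3_5_5_10: "good [3,5,5,10]"
  unfolding good_def
  by (rule disjI1, rule hrp_wit[where xs="[0,(-3),0,0]" and j=0 and k=0 and t="- 15"]) (simp_all add: sum4)

lemma cs_3_5_5_14: "good [3,5,5,14]"
  unfolding good_def
  by (rule disjI1, rule hrp_wit[where xs="[0,(-3),0,0]" and j=0 and k=0 and t="- 15"]) (simp_all add: sum4)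

lemma cs_3_5_6_6: "good [3,5,6,6]"
  unfolding good_def
  by (rule disjI1, rule hrp_wit[where xs="[0,(-3),0,0]" and j=0 and k=0 and t="- 15"]) (simp_all add: sum4)

lemma cs_3_5_6_7: "good [3,5,6,7]"
  unfolding good_def
  by (rule disjI1, rule hrp_wit[where xs="[0,(-3),0,0]" and j=0 and k=0 and t="- 15"]) (simp_all add: sum4)

lemma cs_3_5_6_10: "good [3,5,6,10]"
  unfolding good_def
  by (rule disjI1, rule hrp_wit[where xs="[0,(-3),0,0]" and j=0 and k=0 and t="- 15"]) (simp_all add: sum4)

lemma cs_3_5_6_14: "good [3,5,6,14]"
  unfolding good_def
  by (rule disjI1, rule hrp_wit[where xs="[0,(-3),0,0]" and j=0 and k=0 and t="- 15"]) (simp_all add: sum4)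

lemma cs_3_5_7_7: "good [3,5,7,7]"
  unfolding good_def
  by (rule disjI1, rule hrp_wit[where xs="[0,(-3),0,0]" and j=0 and k=0 and t="- 15"]) (simp_all add: sum4)

lemma cs_3_5_7_10: "good [3,5,7,10]"
  unfolding good_def
  by (rule disjI1, rule hrp_wit[where xs="[0,(-3),0,0]" and j=0 and k=0 and t="- 15"]) (simp_all add: sum4)

lemma cs_3_5_7_14: "good [3,5,7,14]"
  unfolding good_def
  by (rule disjI1, rule hrp_wit[where xs="[0,0,(-1),(-1)]" and j=0 and k=0 and t="- 7"]) (simp_all add: sum4)

lemma cs_3_5_10_10: "good [3,5,10,10]"
  unfolding good_def
  by (rule disjI1, rule hrp_wit[where xs="[0,(-3),0,0]" and j=0 and k=0 and t="- 15"]) (simp_all add: sum4)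

lemma cs_3_5_10_14: "good [3,5,10,14]"
  unfolding good_def
  by (rule disjI1, rule hrp_wit[where xs="[0,(-3),0,0]" and j=0 and k=0 and t="- 15"]) (simp_all add: sum4)

lemma cs_3_5_14_14: "good [3,5,14,14]"
  unfolding good_def
  by (rule disjI1, rule hrp_wit[where xs="[0,(-3),0,0]" and j=0 and k=0 and t="- 15"]) (simp_all add: sum4)

lemma cs_3_6_6_6: "good [3,6,6,6]"
  unfolding good_def
  by (rule disjI1, rule hrp_wit[where xs="[(-2),0,(-2),(-1)]" and j=1 and k=0 and t="- 7"]) (simp_all add: sum4)

lemma cs_3_6_6_7: "good [3,6,6,7]"
  unfolding good_def
  by (rule disjI1, rule hrp_wit[where xs="[0,(-1),0,(-3)]" and j=0 and k=0 and t="- 23"]) (simp_all add: sum4)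

lemma cs_3_6_6_10: "good [3,6,6,10]"
  unfolding good_def
  by (rule disjI1, rule hrp_wit[where xs="[0,0,0,(-3)]" and j=1 and k=0 and t="- 15"]) (simp_all add: sum4)

lemma cs_3_6_6_14: "good [3,6,6,14]"
  unfolding good_def
  by (rule disjI1, rule hrp_wit[where xs="[(-2),0,0,(-3)]" and j=1 and k=0 and t="- 23"]) (simp_all add: sum4)

lemma cs_3_6_7_7: "good [3,6,7,7]"
  unfolding good_def
  by (rule disjI1, rule hrp_wit[where xs="[0,(-1),(-3),0]" and j=0 and k=0 and t="- 23"]) (simp_all add: sum4)

lemma cs_3_6_7_10: "good [3,6,7,10]"
  unfolding good_def
  by (rule disjI1, rule hrp_wit[where xs="[0,0,0,(-3)]" and j=1 and k=0 and t="- 15"]) (simp_all add: sum4)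

lemma cs_3_6_7_14: "good [3,6,7,14]"
  unfolding good_def
  by (rule disjI1, rule hrp_wit[where xs="[0,0,(-1),(-1)]" and j=0 and k=0 and t="- 7"]) (simp_all add: sum4)

lemma cs_3_6_10_10: "good [3,6,10,10]"
  unfolding good_def
  by (rule disjI1, rule hrp_wit[where xs="[0,0,(-3),0]" and j=1 and k=0 and t="- 15"]) (simp_all add: sum4)

lemma cs_3_6_10_14: "good [3,6,10,14]"
  unfolding good_def
  by (rule disjI1, rule hrp_wit[where xs="[0,0,(-3),0]" and j=1 and k=0 and t="- 15"]) (simp_all add: sum4)

lemma cs_3_6_14_14: "good [3,6,14,14]"
  unfolding good_def
  by (rule disjI1, rule hrp_wit[where xs="[(-2),0,(-3),0]" and j=1 and k=0 and t="- 23"]) (simp_all add: sum4)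

lemma cs_3_7_7_7: "good [3,7,7,7]"
  unfolding good_def
  by (rule disjI1, rule hrp_wit[where xs="[0,(-1),(-1),(-1)]" and j=0 and k=0 and t="- 7"]) (simp_all add: sum4)

lemma cs_3_7_7_10: "good [3,7,7,10]"
  unfolding good_def
  by (rule disjI1, rule hrp_wit[where xs="[0,(-2),(-1),(-1)]" and j=0 and k=0 and t="- 15"]) (simp_all add: sum4)

lemma cs_3_7_7_14: "good [3,7,7,14]"
  unfolding good_def
  by (rule disjI1, rule hrp_wit[where xs="[0,(-1),0,(-1)]" and j=0 and k=0 and t="- 7"]) (simp_all add: sum4)

lemma cs_3_7_10_10: "good [3,7,10,10]"
  unfolding good_def
  by (rule disjI1, rule hrp_wit[where xs="[0,0,(-3),(-3)]" and j=0 and k=1 and t="- 15"]) (simp_all add: sum4)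

lemma cs_3_7_10_14: "good [3,7,10,14]"
  unfolding good_def
  by (rule disjI1, rule hrp_wit[where xs="[0,(-1),0,(-1)]" and j=0 and k=0 and t="- 7"]) (simp_all add: sum4)

lemma cs_3_7_14_14: "good [3,7,14,14]"
  unfolding good_def
  by (rule disjI1, rule hrp_wit[where xs="[0,(-1),(-1),0]" and j=0 and k=0 and t="- 7"]) (simp_all add: sum4)

lemma cs_3_10_10_10: "good [3,10,10,10]"
  unfolding good_def
  by (rule disjI1, rule hrp_wit[where xs="[0,(-3),(-3),0]" and j=0 and k=1 and t="- 15"]) (simp_all add: sum4)

lemma cs_3_10_10_14: "good [3,10,10,14]"
  unfolding good_def
  by (rule disjI1, rule hrp_wit[where xs="[0,(-3),(-3),0]" and j=0 and k=1 and t="- 15"]) (simp_all add: sum4)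

lemma cs_3_10_14_14: "good [3,10,14,14]"
  unfolding good_def
  by (rule disjI1, rule hrp_wit[where xs="[0,0,(-2),(-1)]" and j=1 and k=0 and t="- 7"]) (simp_all add: sum4)

lemma cs_3_14_14_14: "good [3,14,14,14]"
  unfolding good_def
  by (rule disjI1, rule hrp_wit[where xs="[0,(-2),(-1),(-1)]" and j=0 and k=1 and t="- 7"]) (simp_all add: sum4)

lemma cs_5_5_5_5: "good [5,5,5,5]"
  unfolding good_def
  by (rule disjI2, rule bexI[where x="map of_int [1,1,1,1]"], rule qe_wit2[where \<alpha>=5 and p="[0,1,2,3]" and ks="[0,0,0,0]" and ts="[25,25,25,25]"]) (simp_all add: all4 Lq_def)

lemma cs_5_5_5_6: "good [5,5,5,6]"
  unfolding good_def
  by (rule disjI1, rule hrp_wit[where xs="[(-3),(-3),0,0]" and j=3 and k=0 and t="- 15"]) (simp_all add: sum4)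

lemma cs_5_5_5_7: "good [5,5,5,7]"
  unfolding good_def
  by (rule disjI1, rule hrp_wit[where xs="[0,0,2,5]" and j=0 and k=0 and t="- 39"]) (simp_all add: sum4)

lemma cs_5_5_5_10: "good [5,5,5,10]"
  unfolding good_def
  by (rule disjI1, rule hrp_wit[where xs="[0,(-2),(-1),(-1)]" and j=0 and k=0 and t="- 7"]) (simp_all add: sum4)

lemma cs_5_5_5_14: "good [5,5,5,14]"
  unfolding good_def
  by (rule disjI1, rule hrp_wit[where xs="[0,0,1,5]" and j=0 and k=0 and t="- 71"]) (simp_all add: sum4)

lemma cs_5_5_6_6: "good [5,5,6,6]"
  unfolding good_def
  by (rule disjI1, rule hrp_wit[where xs="[0,(-1),(-2),(-1)]" and j=0 and k=0 and t="- 7"]) (simp_all add: sum4)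

lemma cs_5_5_6_7: "good [5,5,6,7]"
  unfolding good_def
  by (rule disjI1, rule hrp_wit[where xs="[(-2),(-1),(-2),0]" and j=3 and k=0 and t="- 7"]) (simp_all add: sum4)

lemma cs_5_5_6_10: "good [5,5,6,10]"
  unfolding good_def
  by (rule disjI1, rule hrp_wit[where xs="[0,0,0,(-3)]" and j=2 and k=0 and t="- 15"]) (simp_all add: sum4)

lemma cs_5_5_6_14: "good [5,5,6,14]"
  unfolding good_def
  by (rule disjI1, rule hrp_wit[where xs="[0,(-1),(-3),(-2)]" and j=0 and k=0 and t="- 23"]) (simp_all add: sum4)

lemma cs_5_5_7_7: "good [5,5,7,7]"
  unfolding good_def
  by (rule disjI1, rule hrp_wit[where xs="[0,0,(-2),(-1)]" and j=0 and k=0 and t="- 7"]) (simp_all add: sum4)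

lemma cs_5_5_7_10: "good [5,5,7,10]"
  unfolding good_def
  by (rule disjI1, rule hrp_wit[where xs="[(-3),(-2),0,(-2)]" and j=2 and k=0 and t="- 15"]) (simp_all add: sum4)

lemma cs_5_5_7_14: "good [5,5,7,14]"
  unfolding good_def
  by (rule disjI1, rule hrp_wit[where xs="[0,1,0,5]" and j=0 and k=0 and t="- 71"]) (simp_all add: sum4)

lemma cs_5_5_10_10: "good [5,5,10,10]"
  unfolding good_def
  by (rule disjI2, rule bexI[where x="map of_int [1,1,2,2]"], rule qe_wit2[where \<alpha>=5 and p="[0,1,2,3]" and ks="[0,0,1,1]" and ts="[25,25,25,25]"]) (simp_all add: all4 Lq_def)

lemma cs_5_5_10_14: "good [5,5,10,14]"
  unfolding good_def
  by (rule disjI1, rule hrp_wit[where xs="[0,1,0,5]" and j=0 and k=0 and t="- 71"]) (simp_all add: sum4)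

lemma cs_5_5_14_14: "good [5,5,14,14]"
  unfolding good_def
  by (rule disjI1, rule hrp_wit[where xs="[0,(-1),(-2),(-1)]" and j=0 and k=0 and t="- 15"]) (simp_all add: sum4)

lemma cs_5_6_6_6: "good [5,6,6,6]"
  unfolding good_def
  by (rule disjI1, rule hrp_wit[where xs="[6,0,0,1]" and j=1 and k=0 and t="- 31"]) (simp_all add: sum4)

lemma cs_5_6_6_7: "good [5,6,6,7]"
  unfolding good_def
  by (rule disjI1, rule hrp_wit[where xs="[0,(-1),(-1),(-3)]" and j=0 and k=0 and t="- 15"]) (simp_all add: sum4)

lemma cs_5_6_6_10: "good [5,6,6,10]"
  unfolding good_def
  by (rule disjI1, rule hrp_wit[where xs="[0,0,0,(-3)]" and j=1 and k=0 and t="- 15"]) (simp_all add: sum4)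

lemma cs_5_6_6_14: "good [5,6,6,14]"
  unfolding good_def
  by (rule disjI1, rule hrp_wit[where xs="[(-2),(-3),(-2),0]" and j=3 and k=0 and t="- 7"]) (simp_all add: sum4)

lemma cs_5_6_7_7: "good [5,6,7,7]"
  unfolding good_def
  by (rule disjI1, rule hrp_wit[where xs="[0,0,(-2),(-1)]" and j=0 and k=0 and t="- 7"]) (simp_all add: sum4)

lemma cs_5_6_7_10: "good [5,6,7,10]"
  unfolding good_def
  by (rule disjI1, rule hrp_wit[where xs="[0,0,0,(-3)]" and j=1 and k=0 and t="- 15"]) (simp_all add: sum4)

lemma cs_5_6_7_14: "good [5,6,7,14]"
  unfolding good_def
  by (rule disjI1, rule hrp_wit[where xs="[0,0,(-2),(-1)]" and j=1 and k=0 and t="- 7"]) (simp_all add: sum4)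

lemma cs_5_6_10_10: "good [5,6,10,10]"
  unfolding good_def
  by (rule disjI1, rule hrp_wit[where xs="[0,0,(-3),0]" and j=1 and k=0 and t="- 15"]) (simp_all add: sum4)

lemma cs_5_6_10_14: "good [5,6,10,14]"
  unfolding good_def
  by (rule disjI1, rule hrp_wit[where xs="[0,0,(-3),0]" and j=1 and k=0 and t="- 15"]) (simp_all add: sum4)

lemma cs_5_6_14_14: "good [5,6,14,14]"
  unfolding good_def
  by (rule disjI1, rule hrp_wit[where xs="[0,0,(-3),(-1)]" and j=0 and k=1 and t="- 7"]) (simp_all add: sum4)

lemma cs_5_7_7_7: "good [5,7,7,7]"
  unfolding good_def
  by (rule disjI1, rule hrp_wit[where xs="[0,(-2),(-1),0]" and j=0 and k=0 and t="- 7"]) (simp_all add: sum4)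

lemma cs_5_7_7_10: "good [5,7,7,10]"
  unfolding good_def
  by (rule disjI1, rule hrp_wit[where xs="[0,(-2),(-1),0]" and j=0 and k=0 and t="- 7"]) (simp_all add: sum4)

lemma cs_5_7_7_14: "good [5,7,7,14]"
  unfolding good_def
  by (rule disjI1, rule hrp_wit[where xs="[0,(-2),(-1),0]" and j=0 and k=0 and t="- 7"]) (simp_all add: sum4)

lemma cs_5_7_10_10: "good [5,7,10,10]"
  unfolding good_def
  by (rule disjI1, rule hrp_wit[where xs="[(-1),0,(-3),(-1)]" and j=1 and k=0 and t="- 15"]) (simp_all add: sum4)

lemma cs_5_7_10_14: "good [5,7,10,14]"
  unfolding good_def
  by (rule disjI2, rule bexI[where x="map of_int [1,3,2,6]"], rule qe_wit2[where \<alpha>=5 and p="[0,1,2,3]" and ks="[0,0,1,1]" and ts="[25,105,25,105]"]) (simp_all add: all4 Lq_def)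

lemma cs_5_7_14_14: "good [5,7,14,14]"
  unfolding good_def
  by (rule disjI1, rule hrp_wit[where xs="[0,(-1),(-1),(-1)]" and j=0 and k=0 and t="- 7"]) (simp_all add: sum4)

lemma cs_5_10_10_10: "good [5,10,10,10]"
  unfolding good_def
  by (rule disjI1, rule hrp_wit[where xs="[(-2),0,(-2),(-1)]" and j=1 and k=0 and t="- 7"]) (simp_all add: sum4)

lemma cs_5_10_10_14: "good [5,10,10,14]"
  unfolding good_def
  by (rule disjI1, rule hrp_wit[where xs="[0,0,2,5]" and j=1 and k=0 and t="- 39"]) (simp_all add: sum4)

lemma cs_5_10_14_14: "good [5,10,14,14]"
  unfolding good_def
  by (rule disjI1, rule hrp_wit[where xs="[0,0,(-2),(-1)]" and j=1 and k=0 and t="- 7"]) (simp_all add: sum4)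

lemma cs_5_14_14_14: "good [5,14,14,14]"
  unfolding good_def
  by (rule disjI1, rule hrp_wit[where xs="[0,(-3),(-1),0]" and j=0 and k=1 and t="- 7"]) (simp_all add: sum4)

lemma cs_6_6_6_6: "good [6,6,6,6]"
  unfolding good_def
  by (rule disjI2, rule bexI[where x="map of_int [1,1,1,1]"], rule qe_wit2[where \<alpha>=6 and p="[0,1,2,3]" and ks="[1,1,1,1]" and ts="[9,9,9,9]"]) (simp_all add: all4 Lq_def)

lemma cs_6_6_6_7: "good [6,6,6,7]"
  unfolding good_def
  by (rule disjI1, rule hrp_wit[where xs="[0,1,2,6]" and j=0 and k=0 and t="- 47"]) (simp_all add: sum4)

lemma cs_6_6_6_10: "good [6,6,6,10]"
  unfolding good_def
  by (rule disjI1, rule hrp_wit[where xs="[0,0,0,(-3)]" and j=0 and k=0 and t="- 15"]) (simp_all add: sum4)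

lemma cs_6_6_6_14: "good [6,6,6,14]"
  unfolding good_def
  by (rule disjI1, rule hrp_wit[where xs="[0,(-1),(-1),(-3)]" and j=0 and k=0 and t="- 23"]) (simp_all add: sum4)

lemma cs_6_6_7_7: "good [6,6,7,7]"
  unfolding good_def
  by (rule disjI2, rule bexI[where x="map of_int [1,1,10,10]"], rule qe_wit2[where \<alpha>=6 and p="[0,1,2,3]" and ks="[1,1,1,1]" and ts="[9,9,105,105]"]) (simp_all add: all4 Lq_def)

lemma cs_6_6_7_10: "good [6,6,7,10]"
  unfolding good_def
  by (rule disjI1, rule hrp_wit[where xs="[0,0,0,(-3)]" and j=0 and k=0 and t="- 15"]) (simp_all add: sum4)

lemma cs_6_6_7_14: "good [6,6,7,14]"
  unfolding good_def
  by (rule disjI1, rule hrp_wit[where xs="[0,0,(-2),(-1)]" and j=0 and k=0 and t="- 7"]) (simp_all add: sum4)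

lemma cs_6_6_10_10: "good [6,6,10,10]"
  unfolding good_def
  by (rule disjI1, rule hrp_wit[where xs="[0,0,(-3),0]" and j=0 and k=0 and t="- 15"]) (simp_all add: sum4)

lemma cs_6_6_10_14: "good [6,6,10,14]"
  unfolding good_def
  by (rule disjI1, rule hrp_wit[where xs="[0,0,(-3),0]" and j=0 and k=0 and t="- 15"]) (simp_all add: sum4)

lemma cs_6_6_14_14: "good [6,6,14,14]"
  unfolding good_def
  by (rule disjI2, rule bexI[where x="map of_int [1,1,5,5]"], rule qe_wit2[where \<alpha>=6 and p="[0,1,2,3]" and ks="[1,1,1,1]" and ts="[9,9,105,105]"]) (simp_all add: all4 Lq_def)

lemma cs_6_7_7_7: "good [6,7,7,7]"
  unfolding good_def
  by (rule disjI1, rule hrp_wit[where xs="[0,(-2),(-1),(-1)]" and j=0 and k=0 and t="- 7"]) (simp_all add: sum4)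

lemma cs_6_7_7_10: "good [6,7,7,10]"
  unfolding good_def
  by (rule disjI1, rule hrp_wit[where xs="[0,0,0,(-3)]" and j=0 and k=0 and t="- 15"]) (simp_all add: sum4)

lemma cs_6_7_7_14: "good [6,7,7,14]"
  unfolding good_def
  by (rule disjI1, rule hrp_wit[where xs="[0,(-2),0,(-1)]" and j=0 and k=0 and t="- 7"]) (simp_all add: sum4)

lemma cs_6_7_10_10: "good [6,7,10,10]"
  unfolding good_def
  by (rule disjI1, rule hrp_wit[where xs="[0,0,(-3),0]" and j=0 and k=0 and t="- 15"]) (simp_all add: sum4)

lemma cs_6_7_10_14: "good [6,7,10,14]"
  unfolding good_def
  by (rule disjI1, rule hrp_wit[where xs="[0,(-2),0,(-1)]" and j=0 and k=0 and t="- 7"]) (simp_all add: sum4)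

lemma cs_6_7_14_14: "good [6,7,14,14]"
  unfolding good_def
  by (rule disjI1, rule hrp_wit[where xs="[0,(-2),(-1),0]" and j=0 and k=0 and t="- 7"]) (simp_all add: sum4)

lemma cs_6_10_10_10: "good [6,10,10,10]"
  unfolding good_def
  by (rule disjI1, rule hrp_wit[where xs="[0,(-3),0,0]" and j=0 and k=0 and t="- 15"]) (simp_all add: sum4)

lemma cs_6_10_10_14: "good [6,10,10,14]"
  unfolding good_def
  by (rule disjI1, rule hrp_wit[where xs="[0,(-3),0,0]" and j=0 and k=0 and t="- 15"]) (simp_all add: sum4)

lemma cs_6_10_14_14: "good [6,10,14,14]"
  unfolding good_def
  by (rule disjI1, rule hrp_wit[where xs="[0,(-3),0,0]" and j=0 and k=0 and t="- 15"]) (simp_all add: sum4)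

lemma cs_6_14_14_14: "good [6,14,14,14]"
  unfolding good_def
  by (rule disjI1, rule hrp_wit[where xs="[0,(-1),(-1),(-1)]" and j=0 and k=0 and t="- 7"]) (simp_all add: sum4)

lemma cs_7_7_7_7: "good [7,7,7,7]"
  unfolding good_def
  by (rule disjI2, rule bexI[where x="map of_int [1,1,1,1]"], rule qe_wit2[where \<alpha>=7 and p="[0,1,2,3]" and ks="[0,0,0,0]" and ts="[49,49,49,49]"]) (simp_all add: all4 Lq_def)

lemma cs_7_7_7_10: "good [7,7,7,10]"
  unfolding good_def
  by (rule disjI1, rule hrp_wit[where xs="[(-3),(-1),0,0]" and j=3 and k=0 and t="- 7"]) (simp_all add: sum4)

lemma cs_7_7_7_14: "good [7,7,7,14]"
  unfolding good_def
  by (rule disjI1, rule hrp_wit[where xs="[0,(-2),(-1),(-1)]" and j=0 and k=0 and t="- 7"]) (simp_all add: sum4)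

lemma cs_7_7_10_10: "good [7,7,10,10]"
  unfolding good_def
  by (rule disjI1, rule hrp_wit[where xs="[(-3),(-1),0,0]" and j=2 and k=0 and t="- 7"]) (simp_all add: sum4)

lemma cs_7_7_10_14: "good [7,7,10,14]"
  unfolding good_def
  by (rule disjI1, rule hrp_wit[where xs="[(-3),(-1),0,0]" and j=2 and k=0 and t="- 7"]) (simp_all add: sum4)

lemma cs_7_7_14_14: "good [7,7,14,14]"
  unfolding good_def
  by (rule disjI2, rule bexI[where x="map of_int [1,1,2,2]"], rule qe_wit2[where \<alpha>=7 and p="[0,1,2,3]" and ks="[0,0,1,1]" and ts="[49,49,49,49]"]) (simp_all add: all4 Lq_def)

lemma cs_7_10_10_10: "good [7,10,10,10]"
  unfolding good_def
  by (rule disjI1, rule hrp_wit[where xs="[0,1,4,5]" and j=0 and k=1 and t="- 15"]) (simp_all add: sum4)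

lemma cs_7_10_10_14: "good [7,10,10,14]"
  unfolding good_def
  by (rule disjI1, rule hrp_wit[where xs="[0,0,2,5]" and j=1 and k=0 and t="- 39"]) (simp_all add: sum4)

lemma cs_7_10_14_14: "good [7,10,14,14]"
  unfolding good_def
  by (rule disjI1, rule hrp_wit[where xs="[0,0,(-2),(-1)]" and j=1 and k=0 and t="- 7"]) (simp_all add: sum4)

lemma cs_7_14_14_14: "good [7,14,14,14]"
  unfolding good_def
  by (rule disjI1, rule hrp_wit[where xs="[(-2),0,(-2),(-1)]" and j=1 and k=0 and t="- 7"]) (simp_all add: sum4)

lemma cs_10_10_10_10: "good [10,10,10,10]"
  unfolding good_def
  by (rule disjI2, rule bexI[where x="map of_int [1,1,1,1]"], rule qe_wit2[where \<alpha>=10 and p="[0,1,2,3]" and ks="[1,1,1,1]" and ts="[25,25,25,25]"]) (simp_all add: all4 Lq_def)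

lemma cs_10_10_10_14: "good [10,10,10,14]"
  unfolding good_def
  by (rule disjI1, rule hrp_wit[where xs="[0,0,2,5]" and j=0 and k=0 and t="- 39"]) (simp_all add: sum4)

lemma cs_10_10_14_14: "good [10,10,14,14]"
  unfolding good_def
  by (rule disjI1, rule hrp_wit[where xs="[0,0,(-2),(-1)]" and j=0 and k=0 and t="- 7"]) (simp_all add: sum4)

lemma cs_10_14_14_14: "good [10,14,14,14]"
  unfolding good_def
  by (rule disjI1, rule hrp_wit[where xs="[0,(-2),(-1),0]" and j=0 and k=0 and t="- 7"]) (simp_all add: sum4)

lemma cs_14_14_14_14: "good [14,14,14,14]"
  unfolding good_def
  by (rule disjI2, rule bexI[where x="map of_int [1,1,1,1]"], rule qe_wit2[where \<alpha>=14 and p="[0,1,2,3]" and ks="[1,1,1,1]" and ts="[49,49,49,49]"]) (simp_all add: all4 Lq_def)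

lemma good_sorted:
  fixes x0 x1 x2 x3 :: int
  assumes "x0 \<in> {1,2,3,5,6,7,10,14}" "x1 \<in> {1,2,3,5,6,7,10,14}" "x2 \<in> {1,2,3,5,6,7,10,14}"
    "x3 \<in> {1,2,3,5,6,7,10,14}" "x0 \<le> x1" "x1 \<le> x2" "x2 \<le> x3"
  shows "good [x0,x1,x2,x3]"
  using assms by (elim insertE emptyE) (simp_all add: cs_1_1_1_1 cs_1_1_1_2 cs_1_1_1_3 cs_1_1_1_5 cs_1_1_1_6 cs_1_1_1_7 cs_1_1_1_10 cs_1_1_1_14 cs_1_1_2_2 cs_1_1_2_3 cs_1_1_2_5 cs_1_1_2_6 cs_1_1_2_7 cs_1_1_2_10 cs_1_1_2_14 cs_1_1_3_3 cs_1_1_3_5 cs_1_1_3_6 cs_1_1_3_7 cs_1_1_3_10 cs_1_1_3_14 cs_1_1_5_5 cs_1_1_5_6 cs_1_1_5_7 cs_1_1_5_10 cs_1_1_5_14 cs_1_1_6_6 cs_1_1_6_7 cs_1_1_6_10 cs_1_1_6_14 cs_1_1_7_7 cs_1_1_7_10 cs_1_1_7_14 cs_1_1_10_10 cs_1_1_10_14 cs_1_1_14_14 cs_1_2_2_2 cs_1_2_2_3 cs_1_2_2_5 cs_1_2_2_6 cs_1_2_2_7 cs_1_2_2_10 cs_1_2_2_14 cs_1_2_3_3 cs_1_2_3_5 cs_1_2_3_6 cs_1_2_3_7 cs_1_2_3_10 cs_1_2_3_14 cs_1_2_5_5 cs_1_2_5_6 cs_1_2_5_7 cs_1_2_5_10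 cs_1_2_5_14 cs_1_2_6_6 cs_1_2_6_7 cs_1_2_6_10 cs_1_2_6_14 cs_1_2_7_7 cs_1_2_7_10 cs_1_2_7_14 cs_1_2_10_10 cs_1_2_10_14 cs_1_2_14_14 cs_1_3_3_3 cs_1_3_3_5 cs_1_3_3_6 cs_1_3_3_7 cs_1_3_3_10 cs_1_3_3_14 cs_1_3_5_5 cs_1_3_5_6 cs_1_3_5_7 cs_1_3_5_10 cs_1_3_5_14 cs_1_3_6_6 cs_1_3_6_7 cs_1_3_6_10 cs_1_3_6_14 cs_1_3_7_7 cs_1_3_7_10 cs_1_3_7_14 cs_1_3_10_10 cs_1_3_10_14 cs_1_3_14_14 cs_1_5_5_5 cs_1_5_5_6 cs_1_5_5_7 cs_1_5_5_10 cs_1_5_5_14 cs_1_5_6_6 cs_1_5_6_7 cs_1_5_6_10 cs_1_5_6_14 cs_1_5_7_7 cs_1_5_7_10 cs_1_5_7_14 cs_1_5_10_10 cs_1_5_10_14 cs_1_5_14_14 cs_1_6_6_6 cs_1_6_6_7 cs_1_6_6_10 cs_1_6_6_14 cs_1_6_7_7 cs_1_6_7_10 cs_1_6_7_14 cs_1_6_10_10 cs_1_6_10_14 cs_1_6_14_14 cs_1_7_7_7 cs_1_7_7_10 cs_1_7_7_14 cs_1_7_10_10 cs_1_7_10_14 cs_1_7_14_14 cs_1_10_10_10 cs_1_10_10_14 cs_1_10_14_14 cs_1_14_14_14 cs_2_2_2_2 cs_2_2_2_3 cs_2_2_2_5 cs_2_2_2_6 cs_2_2_2_7 cs_2_2_2_10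 cs_2_2_2_14 cs_2_2_3_3 cs_2_2_3_5 cs_2_2_3_6 cs_2_2_3_7 cs_2_2_3_10 cs_2_2_3_14 cs_2_2_5_5 cs_2_2_5_6 cs_2_2_5_7 cs_2_2_5_10 cs_2_2_5_14 cs_2_2_6_6 cs_2_2_6_7 cs_2_2_6_10 cs_2_2_6_14 cs_2_2_7_7 cs_2_2_7_10 cs_2_2_7_14 cs_2_2_10_10 cs_2_2_10_14 cs_2_2_14_14 cs_2_3_3_3 cs_2_3_3_5 cs_2_3_3_6 cs_2_3_3_7 cs_2_3_3_10 cs_2_3_3_14 cs_2_3_5_5 cs_2_3_5_6 cs_2_3_5_7 cs_2_3_5_10 cs_2_3_5_14 cs_2_3_6_6 cs_2_3_6_7 cs_2_3_6_10 cs_2_3_6_14 cs_2_3_7_7 cs_2_3_7_10 cs_2_3_7_14 cs_2_3_10_10 cs_2_3_10_14 cs_2_3_14_14 cs_2_5_5_5 cs_2_5_5_6 cs_2_5_5_7 cs_2_5_5_10 cs_2_5_5_14 cs_2_5_6_6 cs_2_5_6_7 cs_2_5_6_10 cs_2_5_6_14 cs_2_5_7_7 cs_2_5_7_10 cs_2_5_7_14 cs_2_5_10_10 cs_2_5_10_14 cs_2_5_14_14 cs_2_6_6_6 cs_2_6_6_7 cs_2_6_6_10 cs_2_6_6_14 cs_2_6_7_7 cs_2_6_7_10 cs_2_6_7_14 cs_2_6_10_10 cs_2_6_10_14 cs_2_6_14_14 cs_2_7_7_7 cs_2_7_7_10 cs_2_7_7_14 cs_2_7_10_10 cs_2_7_10_14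 cs_2_7_14_14 cs_2_10_10_10 cs_2_10_10_14 cs_2_10_14_14 cs_2_14_14_14 cs_3_3_3_3 cs_3_3_3_5 cs_3_3_3_6 cs_3_3_3_7 cs_3_3_3_10 cs_3_3_3_14 cs_3_3_5_5 cs_3_3_5_6 cs_3_3_5_7 cs_3_3_5_10 cs_3_3_5_14 cs_3_3_6_6 cs_3_3_6_7 cs_3_3_6_10 cs_3_3_6_14 cs_3_3_7_7 cs_3_3_7_10 cs_3_3_7_14 cs_3_3_10_10 cs_3_3_10_14 cs_3_3_14_14 cs_3_5_5_5 cs_3_5_5_6 cs_3_5_5_7 cs_3_5_5_10 cs_3_5_5_14 cs_3_5_6_6 cs_3_5_6_7 cs_3_5_6_10 cs_3_5_6_14 cs_3_5_7_7 cs_3_5_7_10 cs_3_5_7_14 cs_3_5_10_10 cs_3_5_10_14 cs_3_5_14_14 cs_3_6_6_6 cs_3_6_6_7 cs_3_6_6_10 cs_3_6_6_14 cs_3_6_7_7 cs_3_6_7_10 cs_3_6_7_14 cs_3_6_10_10 cs_3_6_10_14 cs_3_6_14_14 cs_3_7_7_7 cs_3_7_7_10 cs_3_7_7_14 cs_3_7_10_10 cs_3_7_10_14 cs_3_7_14_14 cs_3_10_10_10 cs_3_10_10_14 cs_3_10_14_14 cs_3_14_14_14 cs_5_5_5_5 cs_5_5_5_6 cs_5_5_5_7 cs_5_5_5_10 cs_5_5_5_14 cs_5_5_6_6 cs_5_5_6_7 cs_5_5_6_10 cs_5_5_6_14 cs_5_5_7_7 cs_5_5_7_10 cs_5_5_7_14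 cs_5_5_10_10 cs_5_5_10_14 cs_5_5_14_14 cs_5_6_6_6 cs_5_6_6_7 cs_5_6_6_10 cs_5_6_6_14 cs_5_6_7_7 cs_5_6_7_10 cs_5_6_7_14 cs_5_6_10_10 cs_5_6_10_14 cs_5_6_14_14 cs_5_7_7_7 cs_5_7_7_10 cs_5_7_7_14 cs_5_7_10_10 cs_5_7_10_14 cs_5_7_14_14 cs_5_10_10_10 cs_5_10_10_14 cs_5_10_14_14 cs_5_14_14_14 cs_6_6_6_6 cs_6_6_6_7 cs_6_6_6_10 cs_6_6_6_14 cs_6_6_7_7 cs_6_6_7_10 cs_6_6_7_14 cs_6_6_10_10 cs_6_6_10_14 cs_6_6_14_14 cs_6_7_7_7 cs_6_7_7_10 cs_6_7_7_14 cs_6_7_10_10 cs_6_7_10_14 cs_6_7_14_14 cs_6_10_10_10 cs_6_10_10_14 cs_6_10_14_14 cs_6_14_14_14 cs_7_7_7_7 cs_7_7_7_10 cs_7_7_7_14 cs_7_7_10_10 cs_7_7_10_14 cs_7_7_14_14 cs_7_10_10_10 cs_7_10_10_14 cs_7_10_14_14 cs_7_14_14_14 cs_10_10_10_10 cs_10_10_10_14 cs_10_10_14_14 cs_10_14_14_14 cs_14_14_14_14)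

lemma len4: "length xs = 4 \<Longrightarrow> xs = [xs!0, xs!1, xs!2, xs!3]"
  by (simp add: list_eq_iff_nth_eq all4)

theorem proposition3p2:
  fixes a :: "z2 list"
  assumes "length a = 4"
    and "a ! 0 * a ! 1 * a ! 2 * a ! 3 \<noteq> 0"
  shows "\<not> has_rational_point (map z2_to_Q2 a) \<longleftrightarrow>
    (\<exists>b \<in> set [[1,1,1,1], [1,1,5,5], [1,1,2,2], [1,1,10,10], [1,3,2,6], [1,3,10,14], [1,5,6,14]].
       map z2_to_Q2 a \<simeq>\<^sub>q (b :: Q2 list))"
proof -
  have nz: "a ! 0 \<noteq> 0" "a ! 1 \<noteq> 0" "a ! 2 \<noteq> 0" "a ! 3 \<noteq> 0" using assms(2) by auto
  obtain c0 q0 where c0: "c0 \<in> {1,3,5,7,2,6,10,14}" "q0 \<noteq> 0" "z2_to_Q2 (a!0) = of_int c0 * q0^2"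
    using Q2_class[OF nz(1)] by blast
  obtain c1 q1 where c1: "c1 \<in> {1,3,5,7,2,6,10,14}" "q1 \<noteq> 0" "z2_to_Q2 (a!1) = of_int c1 * q1^2"
    using Q2_class[OF nz(2)] by blast
  obtain c2 q2 where c2: "c2 \<in> {1,3,5,7,2,6,10,14}" "q2 \<noteq> 0" "z2_to_Q2 (a!2) = of_int c2 * q2^2"
    using Q2_class[OF nz(3)] by blast
  obtain c3 q3 where c3: "c3 \<in> {1,3,5,7,2,6,10,14}" "q3 \<noteq> 0" "z2_to_Q2 (a!3) = of_int c3 * q3^2"
    using Q2_class[OF nz(4)] by blast
  define cl where "cl = [c0, c1, c2, c3]"
  have lcl: "length cl = 4" by (simp add: cl_def)
  define A where "A = map z2_to_Q2 a"
  have "A \<simeq>\<^sub>q map of_int cl" unfolding quad_equiv_def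
  proof (intro exI[of _ 1] exI[of _ "\<lambda>i. [q0,q1,q2,q3] ! i"] exI[of _ id] conjI)
    show "\<forall>i<4. [q0,q1,q2,q3] ! i \<noteq> 0" using c0 c1 c2 c3 by (simp add: all4)
    show "\<forall>i<4. A ! i = 1 * map of_int cl ! id i * ([q0,q1,q2,q3] ! i)^2"
      using c0 c1 c2 c3 assms(1) by (simp add: all4 A_def cl_def)
  qed simp_all
  moreover
  define s where "s = sort cl"
  have ls: "length s = 4" by (simp add: s_def cl_def)
  have "mset cl = mset s" by (simp add: s_def)
  then obtain p where p: "p permutes {..<length s}" "permute_list p s = cl"
    by (rule mset_eq_permutation)
  have "map of_int cl \<simeq>\<^sub>q (map of_int s :: Q2 list)" unfolding quad_equiv_def
  proof (intro exI[of _ "1::Q2"] exI[of _ "\<lambda>i::nat. 1::Q2"] exI[of _ p] conjI allI impI)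
    show "p permutes {..<4}" using p(1) ls by simp
    fix i :: nat assume i: "i < 4"
    have "p i < 4" using permutes_in_image[OF p(1), of i] i ls by simp
    moreover have "cl ! i = s ! p i" unfolding p(2)[symmetric] using permute_list_nth[OF p(1)] i ls by simp
    ultimately show "map of_int cl ! i = 1 * map of_int s ! p i * 1^2"
      using i ls lcl by (simp add: nth_map)
  qed simp_all
  ultimately have AS: "A \<simeq>\<^sub>q map of_int s" by (rule qe_trans)
  obtain s0 s1 s2 s3 where sl: "s = [s0, s1, s2, s3]" using len4[OF ls] by blast
  have "sorted s" by (simp add: s_def)
  hence "sorted [s0, s1, s2, s3]" by (simp only: sl)
  hence so: "s0 \<le> s1" "s1 \<le> s2" "s2 \<le> s3" by simp_all
  have "set s = set cl" by (simp add: s_def)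
  hence "set [s0, s1, s2, s3] = {c0, c1, c2, c3}" by (simp add: sl cl_def)
  hence "{s0, s1, s2, s3} \<subseteq> {1,2,3,5,6,7,10,14}" using c0(1) c1(1) c2(1) c3(1) by auto
  hence sR: "s0 \<in> {1,2,3,5,6,7,10,14}" "s1 \<in> {1,2,3,5,6,7,10,14}" "s2 \<in> {1,2,3,5,6,7,10,14}"
    "s3 \<in> {1,2,3,5,6,7,10,14}" by simp_all
  have "good s" using good_sorted[OF sR so] by (simp only: sl)
  hence g: "has_rational_point (map of_int s :: Q2 list) \<or> (\<exists>b\<in>set Lq. (map of_int s :: Q2 list) \<simeq>\<^sub>q b)"
    by (simp add: good_def)
  have e1: "has_rational_point A \<longleftrightarrow> has_rational_point (map of_int s :: Q2 list)"
    using hrp_equiv[OF AS] .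
  have e2: "(\<exists>b\<in>set Lq. A \<simeq>\<^sub>q b) \<longleftrightarrow> (\<exists>b\<in>set Lq. (map of_int s :: Q2 list) \<simeq>\<^sub>q b)"
  proof
    assume "\<exists>b\<in>set Lq. A \<simeq>\<^sub>q b"
    then obtain b where b: "b \<in> set Lq" "A \<simeq>\<^sub>q b" by blast
    have "map of_int s \<simeq>\<^sub>q b" by (rule qe_trans[OF qe_sym[OF AS] b(2)])
    thus "\<exists>b\<in>set Lq. (map of_int s :: Q2 list) \<simeq>\<^sub>q b" using b(1) by blast
  next
    assume "\<exists>b\<in>set Lq. (map of_int s :: Q2 list) \<simeq>\<^sub>q b"
    then obtain b where b: "b \<in> set Lq" "(map of_int s :: Q2 list) \<simeq>\<^sub>q b" by blast
    have "A \<simeq>\<^sub>q b" by (rule qe_trans[OF AS b(2)])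
    thus "\<exists>b\<in>set Lq. A \<simeq>\<^sub>q b" using b(1) by blast
  qed
  have e3: "\<not> has_rational_point (map of_int s :: Q2 list)"
    if hb: "\<exists>b\<in>set Lq. (map of_int s :: Q2 list) \<simeq>\<^sub>q b"
  proof -
    obtain b where b: "b \<in> set Lq" "(map of_int s :: Q2 list) \<simeq>\<^sub>q b" using hb by blast
    show ?thesis using hrp_equiv[OF b(2)] aniso_L[OF b(1)] by simp
  qed
  have "\<not> has_rational_point A \<longleftrightarrow> (\<exists>b\<in>set Lq. A \<simeq>\<^sub>q b)"
    using e1 e2 e3 g by blast
  thus ?thesis by (simp add: A_def Lq_def)
qed

end
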